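(* Let $\mathfrak{T}$ be a triangulation of the strip. Then $t=\Phi(\mathfrak{T})$ is well defined (independent of the choice of the arcs $(p^\circ,q_\circ),(r^\circ,s_\circ)$ in its definition), it is an $\mathrm{SL}_2$-tiling with enough ones, and for all $i,j\in\mathbb{Z}$ we have $t_{ij}=1$ if and only if $(i^\circ,j_\circ)\in\mathfrak{T}$.
   Context: Vertices of the strip: two disjoint copies of $\mathbb{Z}$, written $\mathbb{Z}^\circ=\{p^\circ: p\in\mathbb{Z}\}$ (upper edge) and $\mathbb{Z}_\circ=\{q_\circ : q\in\mathbb{Z}\}$ (lower edge). Geometrically, $p^\circ$ is the point $(-p,1)$ and $q_\circ$ is the point $(q,-1)$ of the strip $\mathbb{R}\times[-1,1]$. A connecting arc is a pair $(p^\circ,q_\circ)$ with $p,q\in\mathbb{Z}$; an internal arc is a pair $(p^\circ,q^\circ)$ or $(p_\circ,q_\circ)$ with $p\le q-2$. Two distinct arcs cross exactly in the following cases: connecting arcs $(p^\circ,q_\circ),(p'^\circ,q'_\circ)$ cross iff $(p-p')(q-q')>0$; internal arcs $(a^\circ,b^\circ),(c^\circ,d^\circ)$ cross iff $a<c<b<d$ or $c<a<d<b$ (same for lower internal arcs); $(a^\circ,b^\circ)$ crosses $(p^\circ,q_\circ)$ iff $a<p<b$, and $(a_\circ,b_\circ)$ crosses $(p^\circ,q_\circ)$ iff $a<q<b$; upper and lower internal arcs never cross. A triangulation of the strip is a maximal set $\mathfrak{T}$ of pairwise non-crossing arcs such that for every $(i,j)\in\mathbb{Z}^2$ there is $(p^\circ,q_\circ)\in\mathfrak{T}$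 with $p<i,\ q>j$, and there is $(p^\circ,q_\circ)\in\mathfrak{T}$ with $p>i,\ q<j$. An $\mathrm{SL}_2$-tiling is a map $t:\mathbb{Z}\times\mathbb{Z}\to\{1,2,3,\dots\}$, $(i,j)\mapsto t_{ij}$, with $t_{ij}t_{i+1,j+1}-t_{i,j+1}t_{i+1,j}=1$ for all $i,j$. It has enough ones if for every $(i,j)$ there is $(p,q)$ with $p<i,\ q>j$ and $t_{pq}=1$, and there is $(p,q)$ with $p>i,\ q<j$ and $t_{pq}=1$. Friese numbers of a triangulated polygon: for a convex polygon with vertices $v_0,\dots,v_n$ in cyclic order and a triangulation $\mathcal{X}$, let $a_l$ be the number of triangles incident with $v_l$; for fixed $k$ define $m_k(k)=0$, $m_k(k+1)=1$, $m_k(l+1)=a_lm_k(l)-m_k(l-1)$ (indices mod $n+1$, $l$ running from $k$ to $k+n$) and set $\mathcal{X}(v_k,v_l)=m_k(l)$. $\Phi(\mathfrak{T})$: for $(i,j)$ choose $(p^\circ,q_\circ),(r^\circ,s_\circ)\in\mathfrak{T}$ with $p<i<r$, $s<j<q$; let $P$ be the polygon with vertices in cyclic order $p^\circ,\dots,r^\circ,s_\circ,\dots,q_\circ$, and $\mathfrak{T}_P$ the triangulation of $P$ formed by the arcs of $\mathfrak{T}$ that are diagonals of $P$; set $\Phi(\mathfrak{T})_{ij}=\mathfrak{T}_P(i^\circ,j_\circ)$. *)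

theory Defs
  imports Main
begin

text \<open>Top x is the upper vertex x-circ at (-x,1); Bot y is the lower vertex y-sub-circ at (y,-1).\<close>
datatype vtx = Top int | Bot int

text \<open>Conn p q is the connecting arc (p-circ, q-sub-circ); Up a b the upper internal arc
 (a-circ, b-circ); Low a b the lower internal arc (a-sub-circ, b-sub-circ).\<close>
datatype arc = Conn int int | Up int int | Low int int

fun is_arc :: "arc \<Rightarrow> bool" where
  "is_arc (Conn p q) = True"
| "is_arc (Up a b) = (a \<le> b - 2)"
| "is_arc (Low a b) = (a \<le> b - 2)"

fun ends :: "arc \<Rightarrow> vtx set" where
  "ends (Conn p q) = {Top p, Bot q}"
| "ends (Up a b) = {Top a, Top b}"
| "ends (Low a b) = {Bot a, Bot b}"

fun crosses :: "arc \<Rightarrow> arc \<Rightarrow> bool" where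
  "crosses (Conn p q) (Conn p' q') = ((p - p') * (q - q') > 0)"
| "crosses (Up a b) (Up c d) = ((a < c \<and> c < b \<and> b < d) \<or> (c < a \<and> a < d \<and> d < b))"
| "crosses (Low a b) (Low c d) = ((a < c \<and> c < b \<and> b < d) \<or> (c < a \<and> a < d \<and> d < b))"
| "crosses (Up a b) (Conn p q) = (a < p \<and> p < b)"
| "crosses (Conn p q) (Up a b) = (a < p \<and> p < b)"
| "crosses (Low a b) (Conn p q) = (a < q \<and> q < b)"
| "crosses (Conn p q) (Low a b) = (a < q \<and> q < b)"
| "crosses (Up a b) (Low c d) = False"
| "crosses (Low a b) (Up c d) = False"

definition strip_triangulation :: "arc set \<Rightarrow> bool" where
  "strip_triangulation T \<longleftrightarrow>
     (\<forall>x\<in>T. is_arc x) \<and>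
     (\<forall>x\<in>T. \<forall>y\<in>T. \<not> crosses x y) \<and>
     (\<forall>x. is_arc x \<and> x \<notin> T \<longrightarrow> (\<exists>y\<in>T. crosses x y)) \<and>
     (\<forall>i j. (\<exists>p q. Conn p q \<in> T \<and> p < i \<and> q > j) \<and>
            (\<exists>p q. Conn p q \<in> T \<and> p > i \<and> q < j))"

definition sl2_tiling :: "(int \<Rightarrow> int \<Rightarrow> int) \<Rightarrow> bool" where
  "sl2_tiling t \<longleftrightarrow> (\<forall>i j. t i j \<ge> 1) \<and>
     (\<forall>i j. t i j * t (i+1) (j+1) - t i (j+1) * t (i+1) j = 1)"

definition enough_ones :: "(int \<Rightarrow> int \<Rightarrow> int) \<Rightarrow> bool" where
  "enough_ones t \<longleftrightarrow> (\<forall>i j. (\<exists>p q. p < i \<and> q > j \<and> t p q = 1) \<and>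
                              (\<exists>p q. p > i \<and> q < j \<and> t p q = 1))"

text \<open>A polygon with N vertices v_0,...,v_{N-1} (indices 0..<N) in cyclic order; D u v means
 that the segment between v_u and v_v belongs to the triangulation.\<close>
definition poly_adj :: "nat \<Rightarrow> (nat \<Rightarrow> nat \<Rightarrow> bool) \<Rightarrow> nat \<Rightarrow> nat \<Rightarrow> bool" where
  "poly_adj N D u v \<longleftrightarrow> u < N \<and> v < N \<and> u \<noteq> v \<and>
     (v = Suc u mod N \<or> u = Suc v mod N \<or> D u v \<or> D v u)"

definition poly_triangles_at :: "nat \<Rightarrow> (nat \<Rightarrow> nat \<Rightarrow> bool) \<Rightarrow> nat \<Rightarrow> nat" where
  "poly_triangles_at N D l = card {S. S \<subseteq> {..<N} \<and> card S = 3 \<and> l \<in> S \<and>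
      (\<forall>u\<in>S. \<forall>v\<in>S. u \<noteq> v \<longrightarrow> poly_adj N D u v)}"

text \<open>friese_seq a N k d = m_k(k+d) (indices mod N).\<close>
fun friese_seq :: "(nat \<Rightarrow> int) \<Rightarrow> nat \<Rightarrow> nat \<Rightarrow> nat \<Rightarrow> int" where
  "friese_seq a N k 0 = 0"
| "friese_seq a N k (Suc 0) = 1"
| "friese_seq a N k (Suc (Suc d)) =
     a ((k + d + 1) mod N) * friese_seq a N k (Suc d) - friese_seq a N k d"

text \<open>X(v_k, v_l) = m_k(l), for k, l < N.\<close>
definition friese :: "nat \<Rightarrow> (nat \<Rightarrow> nat \<Rightarrow> bool) \<Rightarrow> nat \<Rightarrow> nat \<Rightarrow> int" where
  "friese N D k l = friese_seq (\<lambda>x. int (poly_triangles_at N D x)) N k ((l + N - k) mod N)"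

text \<open>Vertices of P in cyclic order: p-circ, ..., r-circ, s-sub-circ, ..., q-sub-circ.\<close>
definition poly_verts :: "int \<Rightarrow> int \<Rightarrow> int \<Rightarrow> int \<Rightarrow> vtx list" where
  "poly_verts p q r s = map Top [p..r] @ map Bot [s..q]"

definition valid_choice :: "arc set \<Rightarrow> int \<Rightarrow> int \<Rightarrow> int \<Rightarrow> int \<Rightarrow> int \<Rightarrow> int \<Rightarrow> bool" where
  "valid_choice T i j p q r s \<longleftrightarrow>
     Conn p q \<in> T \<and> Conn r s \<in> T \<and> p < i \<and> i < r \<and> s < j \<and> j < q"

text \<open>T_P(i-circ, j-sub-circ), where T_P consists of the arcs of T that are diagonals of P.
 Index of i-circ in the vertex list is i - p, index of j-sub-circ is (r - p + 1) + (j - s).\<close>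
definition phi_at :: "arc set \<Rightarrow> int \<Rightarrow> int \<Rightarrow> int \<Rightarrow> int \<Rightarrow> int \<Rightarrow> int \<Rightarrow> int" where
  "phi_at T i j p q r s =
     (let vs = poly_verts p q r s;
          N = length vs;
          D = (\<lambda>u v. \<exists>x\<in>T. ends x = {vs ! u, vs ! v})
      in friese N D (nat (i - p)) (nat (r - p + 1) + nat (j - s)))"

definition Phi :: "arc set \<Rightarrow> int \<Rightarrow> int \<Rightarrow> int" where
  "Phi T i j = (let (p, q, r, s) = (SOME (p, q, r, s). valid_choice T i j p q r s)
                in phi_at T i j p q r s)"

end

theory Submission
  imports Defs
begin


datatype m2 = Mat int int int int

fun mm :: "m2 \<Rightarrow> m2 \<Rightarrow> m2" where
  "mm (Mat a b c d) (Mat e f g h) = Mat (a*e+b*g) (a*f+b*h) (c*e+d*g) (c*f+d*h)"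

definition Mx :: "int \<Rightarrow> m2" where "Mx x = Mat x (-1) 1 0"
definition I2 :: m2 where "I2 = Mat 1 0 0 1"
definition nI2 :: m2 where "nI2 = Mat (-1) 0 0 (-1)"

fun e11 :: "m2 \<Rightarrow> int" where "e11 (Mat a b c d) = a"
fun e12 :: "m2 \<Rightarrow> int" where "e12 (Mat a b c d) = b"
fun e21 :: "m2 \<Rightarrow> int" where "e21 (Mat a b c d) = c"
fun det2 :: "m2 \<Rightarrow> int" where "det2 (Mat a b c d) = a*d - b*c"

lemma mm_assoc: "mm (mm A B) C = mm A (mm B C)"
  by (cases A; cases B; cases C) (simp add: algebra_simps)

lemma mm_I2[simp]: "mm I2 A = A" "mm A I2 = A"
  by (cases A; simp add: I2_def)+

lemma det_mm: "det2 (mm A B) = det2 A * det2 B"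
  by (cases A; cases B) (simp add: algebra_simps)

lemma det_Mx[simp]: "det2 (Mx x) = 1" by (simp add: Mx_def)

fun prodL :: "int list \<Rightarrow> m2" where
  "prodL [] = I2"
| "prodL (x # xs) = mm (prodL xs) (Mx x)"

lemma prodL_append: "prodL (xs @ ys) = mm (prodL ys) (prodL xs)"
  by (induct xs) (auto simp: mm_assoc)

lemma prodL_snoc: "prodL (xs @ [x]) = mm (Mx x) (prodL xs)"
  by (simp add: prodL_append)

lemma det_prodL: "det2 (prodL xs) = 1"
  by (induct xs) (auto simp: det_mm I2_def)

lemma Mx_add: "Mx (x + y) = mm (mm (mm (Mx x) (Mx 0)) (Mx y)) nI2"
  by (simp add: Mx_def nI2_def algebra_simps)

lemma M0M0: "mm (Mx 0) (Mx 0) = nI2" by (simp add: Mx_def nI2_def)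

lemma mm_nI2[simp]: "mm nI2 A = mm A nI2" "mm (mm A nI2) B = mm (mm A B) nI2"
  "mm nI2 nI2 = I2"
  by (cases A; cases B; simp add: nI2_def I2_def)+

lemma swap_negI:
  assumes "mm X Y = nI2" "det2 Y = 1"
  shows "mm Y X = nI2"
proof -
  obtain a b c d where X: "X = Mat a b c d" by (cases X)
  obtain e f g h where Y: "Y = Mat e f g h" by (cases Y)
  from assms have h: "a*e+b*g = -1" "a*f+b*h = 0" "c*e+d*g = 0" "c*f+d*h = -1" "e*h-f*g = 1"
    by (auto simp: X Y nI2_def)
  have "a = -h" 
  proof -
    have "a = a*(e*h-f*g)" using h by simp
    also have "\<dots> = h*(a*e+b*g) - g*(a*f+b*h)" by (simp add: algebra_simps)
    finally show ?thesis using h by simp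
  qed
  moreover have "b = f"
  proof -
    have "b = b*(e*h-f*g)" using h by simp
    also have "\<dots> = e*(a*f+b*h) - f*(a*e+b*g)" by (simp add: algebra_simps)
    finally show ?thesis using h by simp
  qed
  moreover have "c = g"
  proof -
    have "c = c*(e*h-f*g)" using h by simp
    also have "\<dots> = h*(c*e+d*g) - g*(c*f+d*h)" by (simp add: algebra_simps)
    finally show ?thesis using h by simp
  qed
  moreover have "d = -e"
  proof -
    have "d = d*(e*h-f*g)" using h by simp
    also have "\<dots> = e*(c*f+d*h) - f*(c*e+d*g)" by (simp add: algebra_simps)
    finally show ?thesis using h by simp
  qed
  ultimately show ?thesis using h by (simp add: X Y nI2_def algebra_simps)
qed

lemma friese_seq_prod:
  "friese_seq a N k (Suc d) = e11 (prodL (map (\<lambda>t. a ((k+t+1) mod N)) [0..<d]))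
   \<and> friese_seq a N k d = e21 (prodL (map (\<lambda>t. a ((k+t+1) mod N)) [0..<d]))"
proof (induct d)
  case 0 then show ?case by (simp add: I2_def)
next
  case (Suc d)
  obtain A B C D where P: "prodL (map (\<lambda>t. a ((k+t+1) mod N)) [0..<d]) = Mat A B C D"
    by (cases "prodL (map (\<lambda>t. a ((k+t+1) mod N)) [0..<d])")
  show ?case using Suc P by (simp add: prodL_snoc Mx_def)
qed




fun lin :: "'a list \<Rightarrow> 'a \<Rightarrow> 'a \<Rightarrow> bool" where
  "lin [] x y = False"
| "lin [a] x y = False"
| "lin (a # b # rest) x y = ((a = x \<and> b = y) \<or> lin (b # rest) x y)"

lemma lin_Cons: "lin (a # rest) x y \<longleftrightarrow> (rest \<noteq> [] \<and> a = x \<and> hd rest = y) \<or> lin rest x y"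
  by (cases rest) auto

lemma lin_append: "lin (xs @ ys) x y \<longleftrightarrow> lin xs x y \<or> lin ys x y \<or> (xs \<noteq> [] \<and> ys \<noteq> [] \<and> x = last xs \<and> y = hd ys)"
  by (induct xs) (auto simp: lin_Cons)

lemma lin_set: "lin xs x y \<Longrightarrow> x \<in> set xs \<and> y \<in> set xs"
  by (induct xs x y rule: lin.induct) auto

lemma lin_nth: "lin xs x y \<longleftrightarrow> (\<exists>i. Suc i < length xs \<and> xs ! i = x \<and> xs ! Suc i = y)"
proof (induct xs)
  case Nil then show ?case by simp
next
  case (Cons a xs)
  show ?case
  proof
    assume "lin (a # xs) x y"
    then consider "xs \<noteq> [] \<and> a = x \<and> hd xs = y" | "lin xs x y" by (auto simp: lin_Cons)
    then show "\<exists>i. Suc i < length (a # xs) \<and> (a # xs) ! i = x \<and> (a # xs) ! Suc i = y"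
    proof cases
      case 1 then show ?thesis by (intro exI[of _ 0]) (auto simp: hd_conv_nth)
    next
      case 2 with Cons obtain i where "Suc i < length xs" "xs ! i = x" "xs ! Suc i = y" by auto
      then show ?thesis by (intro exI[of _ "Suc i"]) auto
    qed
  next
    assume "\<exists>i. Suc i < length (a # xs) \<and> (a # xs) ! i = x \<and> (a # xs) ! Suc i = y"
    then obtain i where i: "Suc i < length (a # xs)" "(a # xs) ! i = x" "(a # xs) ! Suc i = y" by blast
    show "lin (a # xs) x y"
    proof (cases i)
      case 0 with i show ?thesis by (cases xs) auto
    next
      case (Suc j) with i Cons show ?thesis by (auto simp: lin_Cons)
    qed
  qed
qed

definition cyc :: "'a list \<Rightarrow> 'a \<Rightarrow> 'a \<Rightarrow> bool" where
  "cyc vs x y \<longleftrightarrow> lin vs x y \<or> (vs \<noteq> [] \<and> x = last vs \<and> y = hd vs)"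

lemma cyc_rotate1: "cyc (rotate1 vs) x y \<longleftrightarrow> cyc vs x y"
  by (cases vs) (auto simp: cyc_def lin_append lin_Cons)

lemma cyc_rotate: "cyc (rotate n vs) x y \<longleftrightarrow> cyc vs x y"
  by (induct n) (auto simp: cyc_rotate1)

lemma cyc_set: "cyc vs x y \<Longrightarrow> x \<in> set vs \<and> y \<in> set vs"
  by (auto simp: cyc_def dest: lin_set)

lemma cyc_nth:
  assumes "distinct vs" "u < length vs" "v < length vs"
  shows "cyc vs (vs ! u) (vs ! v) \<longleftrightarrow> v = Suc u mod length vs"
proof -
  have L: "lin vs (vs!u) (vs!v) \<longleftrightarrow> Suc u < length vs \<and> v = Suc u"
    using assms by (auto simp: lin_nth nth_eq_iff_index_eq)
  have W: "(vs \<noteq> [] \<and> vs ! u = last vs \<and> vs ! v = hd vs) \<longleftrightarrow> (Suc u = length vs \<and> v = 0)"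
    using assms by (auto simp: last_conv_nth hd_conv_nth nth_eq_iff_index_eq)
  show ?thesis using assms unfolding cyc_def L W
    by (cases "Suc u < length vs") (auto simp: mod_if)
qed




locale symrel =
  fixes E :: "'a \<Rightarrow> 'a \<Rightarrow> bool"
  assumes Esym: "E x y \<longleftrightarrow> E y x"
begin

definition adjL :: "'a list \<Rightarrow> 'a \<Rightarrow> 'a \<Rightarrow> bool" where
  "adjL vs x y \<longleftrightarrow> x \<in> set vs \<and> y \<in> set vs \<and> x \<noteq> y \<and> (cyc vs x y \<or> cyc vs y x \<or> E x y)"

lemma adjL_sym: "adjL vs x y \<longleftrightarrow> adjL vs y x"
  using Esym by (auto simp: adjL_def)

definition cl :: "'a list \<Rightarrow> 'a \<Rightarrow> 'a set set" where
  "cl vs x = {S. S \<subseteq> set vs \<and> card S = 3 \<and> x \<in> S \<and> (\<forall>a\<in>S. \<forall>b\<in>S. a \<noteq> b \<longrightarrow> adjL vs a b)}"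

definition qd :: "'a list \<Rightarrow> 'a \<Rightarrow> int" where
  "qd vs x = int (card (cl vs x))"

lemma finite_cl: "finite (cl vs x)"
proof -
  have "cl vs x \<subseteq> Pow (set vs)" by (auto simp: cl_def)
  then show ?thesis by (rule finite_subset) simp
qed

lemma adjL_rotate[simp]: "adjL (rotate n vs) = adjL vs"
  by (intro ext) (simp add: adjL_def cyc_rotate)

lemma cl_rotate[simp]: "cl (rotate n vs) = cl vs"
  by (intro ext) (simp add: cl_def)

lemma qd_rotate[simp]: "qd (rotate n vs) = qd vs"
  by (intro ext) (simp add: qd_def)

definition F1 :: "'a list \<Rightarrow> bool" where
  "F1 vs \<longleftrightarrow> (\<forall>s0 pre y post. vs = s0 # pre @ y # post \<longrightarrow>
      e11 (prodL (map (qd vs) pre)) \<ge> 1 \<and> (e11 (prodL (map (qd vs) pre)) = 1 \<longleftrightarrow> adjL vs s0 y))"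

definition F1all :: "'a list \<Rightarrow> bool" where
  "F1all vs \<longleftrightarrow> (\<forall>n. F1 (rotate n vs))"

definition CC :: "'a list \<Rightarrow> bool" where
  "CC vs \<longleftrightarrow> prodL (map (qd vs) vs) = nI2"

lemma CC_rotate1: "CC vs \<Longrightarrow> CC (rotate1 vs)"
proof (cases vs)
  case (Cons v rest)
  assume "CC vs"
  then have "mm (prodL (map (qd vs) rest)) (Mx (qd vs v)) = nI2" by (simp add: CC_def Cons)
  then have "mm (Mx (qd vs v)) (prodL (map (qd vs) rest)) = nI2"
    by (rule swap_negI) simp
  moreover have "qd (rotate1 vs) = qd vs" using qd_rotate[of 1 vs] by simp
  ultimately show ?thesis by (simp add: CC_def Cons prodL_append)
qed (simp add: CC_def)

lemma CC_rotate: "CC vs \<Longrightarrow> CC (rotate n vs)"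
  by (induct n) (auto simp: CC_rotate1)

lemma F1all_rotate: "F1all vs \<Longrightarrow> F1all (rotate n vs)"
  by (simp add: F1all_def rotate_rotate)

inductive V :: "'a list \<Rightarrow> bool" where
  base2: "x \<noteq> y \<Longrightarrow> V [x, y]"
| base3: "distinct [x, y, z] \<Longrightarrow> V [x, y, z]"
| step: "distinct (xs @ u # ys @ w # zs) \<Longrightarrow> E u w \<Longrightarrow>
    (\<forall>a\<in>set ys. \<forall>b\<in>set xs \<union> set zs. \<not> E a b) \<Longrightarrow>
    V (u # ys @ [w]) \<Longrightarrow> V (xs @ [u, w] @ zs) \<Longrightarrow> V (xs @ u # ys @ w # zs)"

lemma V_distinct: "V vs \<Longrightarrow> distinct vs"
  by (induct rule: V.induct) auto

end



context symrel begin

lemma cl_two: "cl [a, b] v = {}"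
proof -
  { fix S assume "S \<subseteq> set [a,b]" "card S = 3"
    then have "card S \<le> card {a,b}" by (intro card_mono) auto
    also have "\<dots> \<le> 2" by (simp add: card_insert_if)
    finally have False using \<open>card S = 3\<close> by simp }
  then show ?thesis by (auto simp: cl_def)
qed

lemma qd_two: "qd [a, b] v = 0" by (simp add: qd_def cl_two)

lemma adjL_three: "distinct [a,b,c] \<Longrightarrow> x \<in> {a,b,c} \<Longrightarrow> y \<in> {a,b,c} \<Longrightarrow> x \<noteq> y \<Longrightarrow> adjL [a,b,c] x y"
  by (auto simp: adjL_def cyc_def)

lemma cl_three: assumes "distinct [a,b,c]" "v \<in> {a,b,c}" shows "cl [a, b, c] v = {{a,b,c}}"
proof -
  { fix S assume S: "S \<subseteq> {a,b,c}" "card S = 3"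
    have "card {a,b,c} = 3" using assms by simp
    then have "S = {a,b,c}" using S by (intro card_subset_eq) auto }
  moreover have "card {a,b,c} = 3" using assms by simp
  ultimately show ?thesis
    unfolding cl_def
  proof (intro set_eqI iffI)
    fix S assume "S \<in> {S. S \<subseteq> set [a, b, c] \<and> card S = 3 \<and> v \<in> S \<and> (\<forall>x\<in>S. \<forall>y\<in>S. x \<noteq> y \<longrightarrow> adjL [a, b, c] x y)}"
    then show "S \<in> {{a,b,c}}" using \<open>\<And>S. S \<subseteq> {a,b,c} \<Longrightarrow> card S = 3 \<Longrightarrow> S = {a,b,c}\<close> by simp
  next
    fix S assume "S \<in> {{a,b,c}}"
    then show "S \<in> {S. S \<subseteq> set [a, b, c] \<and> card S = 3 \<and> v \<in> S \<and> (\<forall>x\<in>S. \<forall>y\<in>S. x \<noteq> y \<longrightarrow> adjL [a, b, c] x y)}"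
      using assms \<open>card {a,b,c} = 3\<close> adjL_three[OF assms(1)] by simp
  qed
qed

lemma qd_three: "distinct [a,b,c] \<Longrightarrow> v \<in> {a,b,c} \<Longrightarrow> qd [a, b, c] v = 1"
  by (simp add: qd_def cl_three)

lemma F1_two: "a \<noteq> b \<Longrightarrow> F1 [a, b]"
  unfolding F1_def
proof (intro allI impI)
  fix s0 pre y post assume "a \<noteq> b" "[a, b] = s0 # pre @ y # post"
  then have "s0 = a" "pre = []" "y = b" by (auto simp: Cons_eq_append_conv)
  then show "1 \<le> e11 (prodL (map (qd [a, b]) pre)) \<and> (e11 (prodL (map (qd [a, b]) pre)) = 1) = adjL [a, b] s0 y"
    using \<open>a \<noteq> b\<close> by (simp add: I2_def adjL_def cyc_def)
qed

lemma F1_three: assumes "distinct [a,b,c]" shows "F1 [a, b, c]"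
  unfolding F1_def
proof (intro allI impI)
  fix s0 pre y post assume h: "[a, b, c] = s0 # pre @ y # post"
  then have "(pre = [] \<and> y = b) \<or> (pre = [b] \<and> y = c)" by (auto simp: Cons_eq_append_conv)
  then show "1 \<le> e11 (prodL (map (qd [a, b, c]) pre)) \<and>
         (e11 (prodL (map (qd [a, b, c]) pre)) = 1) = adjL [a, b, c] s0 y"
    using h assms qd_three[OF assms, of b] adjL_three[OF assms]
    by (auto simp: I2_def Mx_def)
qed

lemma len2: "length vs = 2 \<Longrightarrow> \<exists>a b. vs = [a,b]"
  by (cases vs; cases "tl vs") auto
lemma len3: "length vs = 3 \<Longrightarrow> \<exists>a b c. vs = [a,b,c]"
  by (cases vs; cases "tl vs"; cases "tl (tl vs)") auto

lemma F1all_two: "a \<noteq> b \<Longrightarrow> F1all [a, b]"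
  unfolding F1all_def
proof
  fix n assume "a \<noteq> b"
  then have "length (rotate n [a,b]) = 2" "distinct (rotate n [a,b])" by auto
  then obtain x y where "rotate n [a,b] = [x,y]" using len2 by blast
  then show "F1 (rotate n [a,b])" using \<open>distinct (rotate n [a,b])\<close> F1_two by auto
qed

lemma F1all_three: "distinct [a,b,c] \<Longrightarrow> F1all [a, b, c]"
  unfolding F1all_def
proof
  fix n assume d: "distinct [a,b,c]"
  then have "length (rotate n [a,b,c]) = 3" "distinct (rotate n [a,b,c])" by auto
  then obtain x y z where "rotate n [a,b,c] = [x,y,z]" using len3 by blast
  then show "F1 (rotate n [a,b,c])" using \<open>distinct (rotate n [a,b,c])\<close> F1_three by auto
qed

lemma CC_two: "CC [a, b]"
  by (simp add: CC_def qd_two Mx_def I2_def nI2_def)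

lemma CC_three: "distinct [a,b,c] \<Longrightarrow> CC [a, b, c]"
  by (simp add: CC_def qd_three Mx_def I2_def nI2_def)

end



lemma last_in: "xs \<noteq> [] \<Longrightarrow> last xs \<in> set xs" by simp
lemma hd_in: "xs \<noteq> [] \<Longrightarrow> hd xs \<in> set xs" by simp

lemma cyc_block:
  assumes d: "distinct (A @ B @ C)" and x: "x \<in> set B" and y: "y \<in> set B"
  shows "cyc (A @ B @ C) x y \<longleftrightarrow> lin B x y \<or> (A = [] \<and> C = [] \<and> x = last B \<and> y = hd B)"
proof -
  have nx: "x \<notin> set A" "x \<notin> set C" "y \<notin> set A" "y \<notin> set C" using d x y by auto
  have "B \<noteq> []" using x by auto
  then show ?thesis unfolding cyc_def lin_append
    using nx lin_set[of A x y] lin_set[of C x y] last_in[of A] hd_in[of C] last_in[of C] hd_in[of A]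
    by (auto simp: last_append hd_append split: if_splits)
qed

lemma cyc_block2:
  assumes d: "distinct (B @ C)" and x: "x \<in> set C" and y: "y \<in> set B"
  and nl: "x \<noteq> last B" and nh: "y \<noteq> hd B"
  shows "\<not> cyc (B @ C) x y"
proof -
  have nx: "x \<notin> set B" "y \<notin> set C" using d x y by auto
  show ?thesis unfolding cyc_def lin_append
    using nx x y lin_set[of B x y] lin_set[of C x y] nl nh
    by (auto simp: last_append hd_append split: if_splits)
qed

lemma cyc_block3:
  assumes d: "distinct (B @ C)" and x: "x \<in> set C" and y: "y \<in> set B"
  and nl: "y \<noteq> last B"
  shows "\<not> cyc (B @ C) y x"
proof -
  have nx: "x \<notin> set B" "y \<notin> set C" using d x y by auto
  show ?thesis unfolding cyc_def lin_append
    using nx x y lin_set[of B y x] lin_set[of C y x] nl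
    by (auto simp: last_append hd_append split: if_splits)
qed

lemma rot_w: "rotate (length xs + 1 + length ys) (xs @ u # ys @ w # zs) = w # zs @ xs @ u # ys"
proof -
  have "xs @ u # ys @ w # zs = (xs @ u # ys) @ (w # zs)" by simp
  moreover have "length xs + 1 + length ys = length (xs @ u # ys)" by simp
  ultimately show ?thesis by (metis append.assoc append_Cons rotate_append)
qed

lemma rot_w2: "rotate (length xs + 1) (xs @ [u, w] @ zs) = w # zs @ xs @ [u]"
  using rot_w[where xs=xs and u=u and ys="[]" and w=w and zs=zs] by simp

context symrel begin

lemma adj_p1:
  assumes d: "distinct (xs @ u # ys @ w # zs)" and E: "E u w"
    and x: "x \<in> set (u # ys @ [w])" and y: "y \<in> set (u # ys @ [w])"
  shows "adjL (xs @ u # ys @ w # zs) x y \<longleftrightarrow> adjL (u # ys @ [w]) x y"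
proof -
  have e: "xs @ u # ys @ w # zs = xs @ (u # ys @ [w]) @ zs" by simp
  have d': "distinct (xs @ (u # ys @ [w]) @ zs)" using d by simp
  have c: "\<And>a b. a \<in> set (u # ys @ [w]) \<Longrightarrow> b \<in> set (u # ys @ [w]) \<Longrightarrow>
      cyc (xs @ u # ys @ w # zs) a b \<longleftrightarrow> lin (u # ys @ [w]) a b \<or> (xs = [] \<and> zs = [] \<and> a = w \<and> b = u)"
    unfolding e using cyc_block[OF d'] by simp
  have c1: "\<And>a b. cyc (u # ys @ [w]) a b \<longleftrightarrow> lin (u # ys @ [w]) a b \<or> (a = w \<and> b = u)"
    by (simp add: cyc_def)
  show ?thesis unfolding adjL_def using c[OF x y] c[OF y x] c1[of x y] c1[of y x] x y E Esym
    by auto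
qed

lemma adj_p2:
  assumes d: "distinct (xs @ u # ys @ w # zs)" and E: "E u w"
    and x: "x \<in> set (xs @ [u, w] @ zs)" and y: "y \<in> set (xs @ [u, w] @ zs)"
  shows "adjL (xs @ u # ys @ w # zs) x y \<longleftrightarrow> adjL (xs @ [u, w] @ zs) x y"
proof -
  let ?B = "w # zs @ xs @ [u]"
  have e: "w # zs @ xs @ u # ys = [] @ ?B @ ys" by simp
  have d': "distinct ([] @ ?B @ ys)" using d by auto
  have xB: "x \<in> set ?B" "y \<in> set ?B" using x y by auto
  have c: "\<And>a b. a \<in> set ?B \<Longrightarrow> b \<in> set ?B \<Longrightarrow>
      cyc (xs @ u # ys @ w # zs) a b \<longleftrightarrow> lin ?B a b \<or> (ys = [] \<and> a = u \<and> b = w)"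
  proof -
    fix a b assume "a \<in> set ?B" "b \<in> set ?B"
    have "cyc (xs @ u # ys @ w # zs) a b = cyc (w # zs @ xs @ u # ys) a b"
      using cyc_rotate[of "length xs + 1 + length ys" "xs @ u # ys @ w # zs"] rot_w by metis
    also have "\<dots> \<longleftrightarrow> lin ?B a b \<or> (ys = [] \<and> a = u \<and> b = w)"
      unfolding e using cyc_block[OF d' \<open>a \<in> set ?B\<close> \<open>b \<in> set ?B\<close>] by simp
    finally show "cyc (xs @ u # ys @ w # zs) a b \<longleftrightarrow> lin ?B a b \<or> (ys = [] \<and> a = u \<and> b = w)" .
  qed
  have c1: "\<And>a b. cyc (xs @ [u, w] @ zs) a b \<longleftrightarrow> lin ?B a b \<or> (a = u \<and> b = w)"
  proof -
    fix a b
    have "cyc (xs @ [u, w] @ zs) a b = cyc ?B a b"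
      using cyc_rotate[of "length xs + 1" "xs @ [u, w] @ zs"] rot_w2 by metis
    then show "cyc (xs @ [u, w] @ zs) a b \<longleftrightarrow> lin ?B a b \<or> (a = u \<and> b = w)"
      by (simp add: cyc_def)
  qed
  show ?thesis unfolding adjL_def using c[OF xB] c[OF xB(2,1)] c1[of x y] c1[of y x] x y E Esym
    by auto
qed

lemma adj_p3:
  assumes d: "distinct (xs @ u # ys @ w # zs)"
    and cr: "\<forall>a\<in>set ys. \<forall>b\<in>set xs \<union> set zs. \<not> E a b"
    and x: "x \<in> set ys" and y: "y \<in> set xs \<union> set zs"
  shows "\<not> adjL (xs @ u # ys @ w # zs) x y"
proof -
  let ?B = "w # zs @ xs @ [u]"
  have d': "distinct (?B @ ys)" using d by auto
  have r: "\<And>a b. cyc (xs @ u # ys @ w # zs) a b = cyc (?B @ ys) a b"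
    using cyc_rotate[of "length xs + 1 + length ys" "xs @ u # ys @ w # zs"] rot_w by (metis append.assoc append_Cons append_Nil)
  have yB: "y \<in> set ?B" using y by auto
  have n1: "x \<noteq> last ?B" "y \<noteq> hd ?B" using d x y by auto
  have n2': "\<not> cyc (?B @ ys) y x"
    using cyc_block3[OF d' x yB] n1 d y by auto
  show ?thesis unfolding adjL_def r using cyc_block2[OF d' x yB n1] n2' cr x y Esym by auto
qed

end



context symrel begin

lemma sets_p:
  assumes d: "distinct (xs @ u # ys @ w # zs)"
  shows "set (xs @ u # ys @ w # zs) = set (u # ys @ [w]) \<union> set (xs @ [u, w] @ zs)"
    and "set (u # ys @ [w]) \<inter> set (xs @ [u, w] @ zs) = {u, w}"
  using d by auto

lemma card3_not_sub2: "card S = 3 \<Longrightarrow> S \<subseteq> {u, w} \<Longrightarrow> False"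
proof -
  assume "card S = 3" "S \<subseteq> {u, w}"
  then have "card S \<le> card {u, w}" by (intro card_mono) auto
  also have "\<dots> \<le> 2" by (simp add: card_insert_if)
  finally show False using \<open>card S = 3\<close> by simp
qed

lemma cl_split:
  assumes d: "distinct (xs @ u # ys @ w # zs)" and E: "E u w"
    and cr: "\<forall>a\<in>set ys. \<forall>b\<in>set xs \<union> set zs. \<not> E a b"
  shows "x \<in> set ys \<Longrightarrow> cl (xs @ u # ys @ w # zs) x = cl (u # ys @ [w]) x"
    and "x \<in> set xs \<union> set zs \<Longrightarrow> cl (xs @ u # ys @ w # zs) x = cl (xs @ [u, w] @ zs) x"
    and "x \<in> {u, w} \<Longrightarrow> cl (xs @ u # ys @ w # zs) x = cl (u # ys @ [w]) x \<union> cl (xs @ [u, w] @ zs) x"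
    and "cl (u # ys @ [w]) x \<inter> cl (xs @ [u, w] @ zs) x = {}"
proof -
  let ?vs = "xs @ u # ys @ w # zs" and ?p1 = "u # ys @ [w]" and ?p2 = "xs @ [u, w] @ zs"
  note a1 = adj_p1[OF d E] and a2 = adj_p2[OF d E] and a3 = adj_p3[OF d cr]
  have sv: "set ?vs = set ?p1 \<union> set ?p2" using d by auto
  have sub: "\<And>S. S \<in> cl ?vs x \<Longrightarrow> S \<subseteq> set ?p1 \<or> S \<subseteq> set ?p2"
  proof -
    fix S assume S: "S \<in> cl ?vs x"
    show "S \<subseteq> set ?p1 \<or> S \<subseteq> set ?p2"
    proof (cases "\<exists>y\<in>S. y \<in> set ys")
      case True
      then obtain y where y: "y \<in> S" "y \<in> set ys" by blast
      have "S \<subseteq> set ?p1"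
      proof
        fix z assume z: "z \<in> S"
        show "z \<in> set ?p1"
        proof (rule ccontr)
          assume "z \<notin> set ?p1"
          moreover have "z \<in> set ?vs" using S z by (auto simp: cl_def)
          ultimately have zz: "z \<in> set xs \<union> set zs" by auto
          then have "z \<noteq> y" using d y by auto
          then have "adjL ?vs y z" using S z y by (auto simp: cl_def)
          then show False using a3[OF y(2) zz] by simp
        qed
      qed
      then show ?thesis by simp
    next
      case False
      then have "S \<subseteq> set ?p2" using S by (auto simp: cl_def)
      then show ?thesis by simp
    qed
  qed
  have toP1: "\<And>S. S \<subseteq> set ?p1 \<Longrightarrow> S \<in> cl ?vs x \<longleftrightarrow> S \<in> cl ?p1 x"
  proof -
    fix S assume S: "S \<subseteq> set ?p1"
    have eq: "\<And>a b. a \<in> S \<Longrightarrow> b \<in> S \<Longrightarrow> adjL ?vs a b = adjL ?p1 a b" by (rule a1) (use S in auto)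
    have pw: "(\<forall>a\<in>S. \<forall>b\<in>S. a \<noteq> b \<longrightarrow> adjL ?vs a b) \<longleftrightarrow> (\<forall>a\<in>S. \<forall>b\<in>S. a \<noteq> b \<longrightarrow> adjL ?p1 a b)"
      using eq by blast
    have S1: "S \<subseteq> set ?vs" using S by auto
    show "S \<in> cl ?vs x \<longleftrightarrow> S \<in> cl ?p1 x" unfolding cl_def mem_Collect_eq using pw S S1 by blast
  qed
  have toP2: "\<And>S. S \<subseteq> set ?p2 \<Longrightarrow> S \<in> cl ?vs x \<longleftrightarrow> S \<in> cl ?p2 x"
  proof -
    fix S assume S: "S \<subseteq> set ?p2"
    have eq: "\<And>a b. a \<in> S \<Longrightarrow> b \<in> S \<Longrightarrow> adjL ?vs a b = adjL ?p2 a b" by (rule a2) (use S in auto)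
    have pw: "(\<forall>a\<in>S. \<forall>b\<in>S. a \<noteq> b \<longrightarrow> adjL ?vs a b) \<longleftrightarrow> (\<forall>a\<in>S. \<forall>b\<in>S. a \<noteq> b \<longrightarrow> adjL ?p2 a b)"
      using eq by blast
    have S1: "S \<subseteq> set ?vs" using S by auto
    show "S \<in> cl ?vs x \<longleftrightarrow> S \<in> cl ?p2 x" unfolding cl_def mem_Collect_eq using pw S S1 by blast
  qed
  show "cl ?p1 x \<inter> cl ?p2 x = {}"
  proof -
    { fix S assume "S \<in> cl ?p1 x" "S \<in> cl ?p2 x"
      then have "S \<subseteq> set ?p1 \<inter> set ?p2" "card S = 3" unfolding cl_def by auto
      then have "S \<subseteq> {u, w}" "card S = 3" using sets_p(2)[OF d] by auto
      then have False using card3_not_sub2[of S u w] by simp }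
    then show ?thesis by blast
  qed
  have s1: "\<And>S. S \<in> cl ?p1 x \<Longrightarrow> S \<subseteq> set ?p1" unfolding cl_def by blast
  have s2: "\<And>S. S \<in> cl ?p2 x \<Longrightarrow> S \<subseteq> set ?p2" unfolding cl_def by blast
  have xin: "\<And>S. S \<in> cl ?vs x \<Longrightarrow> x \<in> S" unfolding cl_def by blast
  show "x \<in> {u, w} \<Longrightarrow> cl ?vs x = cl ?p1 x \<union> cl ?p2 x"
  proof (intro set_eqI iffI)
    fix S assume "S \<in> cl ?vs x"
    then show "S \<in> cl ?p1 x \<union> cl ?p2 x" using sub[of S] toP1[of S] toP2[of S] by auto
  next
    fix S assume "S \<in> cl ?p1 x \<union> cl ?p2 x"
    then show "S \<in> cl ?vs x" using s1[of S] s2[of S] toP1[of S] toP2[of S] by auto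
  qed
  show "x \<in> set ys \<Longrightarrow> cl ?vs x = cl ?p1 x"
  proof (intro set_eqI iffI)
    fix S assume x: "x \<in> set ys" and S: "S \<in> cl ?vs x"
    have "x \<notin> set ?p2" using x d by auto
    then have "\<not> S \<subseteq> set ?p2" using xin[OF S] by auto
    then show "S \<in> cl ?p1 x" using sub[OF S] toP1[of S] S by auto
  next
    fix S assume "S \<in> cl ?p1 x"
    then show "S \<in> cl ?vs x" using s1[of S] toP1[of S] by auto
  qed
  show "x \<in> set xs \<union> set zs \<Longrightarrow> cl ?vs x = cl ?p2 x"
  proof (intro set_eqI iffI)
    fix S assume x: "x \<in> set xs \<union> set zs" and S: "S \<in> cl ?vs x"
    have "x \<notin> set ?p1" using x d by auto
    then have "\<not> S \<subseteq> set ?p1" using xin[OF S] by auto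
    then show "S \<in> cl ?p2 x" using sub[OF S] toP2[of S] S by auto
  next
    fix S assume "S \<in> cl ?p2 x"
    then show "S \<in> cl ?vs x" using s2[of S] toP2[of S] by auto
  qed
qed

lemma qd_split:
  assumes d: "distinct (xs @ u # ys @ w # zs)" and E: "E u w"
    and cr: "\<forall>a\<in>set ys. \<forall>b\<in>set xs \<union> set zs. \<not> E a b"
  shows "x \<in> set ys \<Longrightarrow> qd (xs @ u # ys @ w # zs) x = qd (u # ys @ [w]) x"
    and "x \<in> set xs \<union> set zs \<Longrightarrow> qd (xs @ u # ys @ w # zs) x = qd (xs @ [u, w] @ zs) x"
    and "x \<in> {u, w} \<Longrightarrow> qd (xs @ u # ys @ w # zs) x = qd (u # ys @ [w]) x + qd (xs @ [u, w] @ zs) x"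
proof -
  note c = cl_split[OF d E cr]
  show "x \<in> set ys \<Longrightarrow> qd (xs @ u # ys @ w # zs) x = qd (u # ys @ [w]) x"
    unfolding qd_def using c(1) by simp
  show "x \<in> set xs \<union> set zs \<Longrightarrow> qd (xs @ u # ys @ w # zs) x = qd (xs @ [u, w] @ zs) x"
    unfolding qd_def using c(2) by simp
  show "x \<in> {u, w} \<Longrightarrow> qd (xs @ u # ys @ w # zs) x = qd (u # ys @ [w]) x + qd (xs @ [u, w] @ zs) x"
    unfolding qd_def using c(3)[of x] c(4)[of x] card_Un_disjoint[OF finite_cl finite_cl] by simp
qed

end



lemma CC_P: assumes "mm (mm (Mx c) P) (Mx b) = nI2" shows "P = Mat 1 (-b) c (1 - c*b)"
proof -
  obtain p q r s where P: "P = Mat p q r s" by (cases P)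
  from assms have h: "(c*p - r)*b + (c*q - s) = -1" "-(c*p - r) = 0" "p*b+q = 0" "-p = -1"
    by (auto simp: P Mx_def nI2_def algebra_simps)
  then have "p = 1" "r = c" "q = -b" by auto
  with h(1) have "s = 1 - c*b" by (simp add: algebra_simps)
  with \<open>p = 1\<close> \<open>r = c\<close> \<open>q = -b\<close> show ?thesis by (simp add: P)
qed

lemma glue_mid: assumes "mm (mm (Mx c) P) (Mx b) = nI2"
  shows "mm (mm (Mx (c + d)) P) (Mx (b + e)) = mm (Mx d) (Mx e)"
  using CC_P[OF assms] by (simp add: Mx_def algebra_simps)

lemma glue_A3: assumes "mm (mm (Mx c) P) (Mx b) = nI2"
  shows "e11 (mm (mm P (Mx (b + e))) Q) = e11 (mm (Mx e) Q)"
  using CC_P[OF assms] by (cases Q) (simp add: Mx_def algebra_simps)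

lemma glue_B2: assumes "mm (mm (Mx c) P) (Mx b) = nI2"
  shows "e11 (mm Z (mm (Mx (c + e)) P)) = e11 (mm Z (Mx e))"
  using CC_P[OF assms] by (cases Z) (simp add: Mx_def algebra_simps)

lemma glue_A2: "e11 (mm (mm P (Mx (b + e))) Q) = e11 (mm P (Mx b)) * e11 Q + e11 P * e11 (mm (Mx e) Q)"
  by (cases P; cases Q) (simp add: Mx_def algebra_simps)

lemma prodL5: "prodL (A @ [x] @ B @ [y] @ C) = mm (mm (prodL C) (mm (mm (Mx y) (prodL B)) (Mx x))) (prodL A)"
  by (simp add: prodL_append mm_assoc)

lemma prodL3: "prodL (A @ [x] @ B) = mm (mm (prodL B) (Mx x)) (prodL A)"
  by (simp add: prodL_append mm_assoc)

lemma split_unique: "y \<notin> set pre \<Longrightarrow> y \<notin> set pre' \<Longrightarrow> pre @ y # post = pre' @ y # post' \<Longrightarrow> pre = pre'"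
proof (induct pre arbitrary: pre')
  case Nil then show ?case by (cases pre') auto
next
  case (Cons a pre) then show ?case by (cases pre') auto
qed




context symrel begin

lemma CC1_form: "CC (u # ys @ [w]) \<Longrightarrow>
  mm (mm (Mx (qd (u # ys @ [w]) w)) (prodL (map (qd (u # ys @ [w])) ys))) (Mx (qd (u # ys @ [w]) u)) = nI2"
  unfolding CC_def by (simp add: prodL_snoc)

lemma map_eq_on: "(\<And>x. x \<in> set L \<Longrightarrow> f x = g x) \<Longrightarrow> map f L = map g L" by simp

lemma prod_outer:
  assumes d: "distinct (xs @ u # ys @ w # zs)" and E: "E u w"
    and cr: "\<forall>a\<in>set ys. \<forall>b\<in>set xs \<union> set zs. \<not> E a b"
    and CC1: "CC (u # ys @ [w])"
    and X: "set X \<subseteq> set xs \<union> set zs" and Z: "set Z \<subseteq> set xs \<union> set zs"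
  shows "prodL (map (qd (xs @ u # ys @ w # zs)) (X @ [u] @ ys @ [w] @ Z))
       = prodL (map (qd (xs @ [u, w] @ zs)) (X @ [u] @ [] @ [w] @ Z))"
proof -
  let ?vs = "xs @ u # ys @ w # zs" and ?p1 = "u # ys @ [w]" and ?p2 = "xs @ [u, w] @ zs"
  note q = qd_split[OF d E cr]
  have mX: "map (qd ?vs) X = map (qd ?p2) X" using q(2) X by (intro map_eq_on) auto
  have mZ: "map (qd ?vs) Z = map (qd ?p2) Z" using q(2) Z by (intro map_eq_on) auto
  have mY: "map (qd ?vs) ys = map (qd ?p1) ys" using q(1) by (intro map_eq_on) auto
  have qu: "qd ?vs u = qd ?p1 u + qd ?p2 u" and qw: "qd ?vs w = qd ?p1 w + qd ?p2 w" using q(3) by auto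
  have mid: "mm (mm (Mx (qd ?vs w)) (prodL (map (qd ?vs) ys))) (Mx (qd ?vs u)) = mm (Mx (qd ?p2 w)) (Mx (qd ?p2 u))"
    unfolding qu qw mY by (rule glue_mid[OF CC1_form[OF CC1]])
  show ?thesis
    unfolding map_append list.map prodL5 mX mZ
    using mid by (simp add: I2_def[symmetric])
qed

lemma step_CC:
  assumes d: "distinct (xs @ u # ys @ w # zs)" and E: "E u w"
    and cr: "\<forall>a\<in>set ys. \<forall>b\<in>set xs \<union> set zs. \<not> E a b"
    and CC1: "CC (u # ys @ [w])" and CC2: "CC (xs @ [u, w] @ zs)"
  shows "CC (xs @ u # ys @ w # zs)"
proof -
  have "prodL (map (qd (xs @ u # ys @ w # zs)) (xs @ [u] @ ys @ [w] @ zs))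
       = prodL (map (qd (xs @ [u, w] @ zs)) (xs @ [u] @ [] @ [w] @ zs))"
    by (rule prod_outer[OF d E cr CC1]) auto
  then show ?thesis using CC2 by (simp add: CC_def)
qed

end



context symrel begin

lemma F1D: "F1 L \<Longrightarrow> L = s0 # pre @ y # post \<Longrightarrow>
   e11 (prodL (map (qd L) pre)) \<ge> 1 \<and> (e11 (prodL (map (qd L) pre)) = 1 \<longleftrightarrow> adjL L s0 y)"
  unfolding F1_def by blast

lemma F1all_D: "F1all L \<Longrightarrow> rotate n L = s0 # pre @ y # post \<Longrightarrow>
   e11 (prodL (map (qd L) pre)) \<ge> 1 \<and> (e11 (prodL (map (qd L) pre)) = 1 \<longleftrightarrow> adjL L s0 y)"
proof -
  assume a: "F1all L" "rotate n L = s0 # pre @ y # post"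
  have "F1 (rotate n L)" using a(1) unfolding F1all_def by blast
  from F1D[OF this a(2)] show ?thesis unfolding qd_rotate adjL_rotate .
qed

lemma F1all_D0: "F1all L \<Longrightarrow> L = s0 # pre @ y # post \<Longrightarrow>
   e11 (prodL (map (qd L) pre)) \<ge> 1 \<and> (e11 (prodL (map (qd L) pre)) = 1 \<longleftrightarrow> adjL L s0 y)"
  using F1all_D[of L 0] by simp

lemma rot_p1: "rotate (length (u # ys)) (u # ys @ [w]) = w # u # ys"
  using rotate_append[of "u # ys" "[w]"] by simp

lemma step_F1:
  assumes d: "distinct (xs @ u # ys @ w # zs)" and E: "E u w"
    and cr: "\<forall>a\<in>set ys. \<forall>b\<in>set xs \<union> set zs. \<not> E a b"
    and CC1: "CC (u # ys @ [w])" and CC2: "CC (xs @ [u, w] @ zs)"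
    and F1: "F1all (u # ys @ [w])" and F2: "F1all (xs @ [u, w] @ zs)"
  shows "F1 (xs @ u # ys @ w # zs)"
  unfolding F1_def
proof (intro allI impI)
  let ?vs = "xs @ u # ys @ w # zs" and ?p1 = "u # ys @ [w]" and ?p2 = "xs @ [u, w] @ zs"
  note q = qd_split[OF d E cr]
  fix s0 pre y post assume h: "?vs = s0 # pre @ y # post"
  let ?c = "e11 (prodL (map (qd ?vs) pre))"
  have dh: "distinct (s0 # pre @ y # post)" using d h by metis
  then have ypre: "y \<notin> set pre" "y \<noteq> s0" by auto
  show "?c \<ge> 1 \<and> (?c = 1 \<longleftrightarrow> adjL ?vs s0 y)"
  proof (cases xs)
    case (Cons x0 xs')
    then have s0: "s0 = x0" and h2: "pre @ y # post = xs' @ u # ys @ w # zs" using h by auto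
    have yin: "y \<in> set (xs' @ [u]) \<or> y \<in> set ys \<or> y = w \<or> y \<in> set zs"
    proof -
      have "y \<in> set (pre @ y # post)" by simp
      then show ?thesis unfolding h2 by auto
    qed
    have x0in: "x0 \<in> set ?p2" using Cons by simp
    have dp2: "distinct ?p2" using d by auto
    from yin show ?thesis
    proof (elim disjE)
      assume y: "y \<in> set (xs' @ [u])"
      then obtain pre1 post1 where sp: "xs' @ [u] = pre1 @ y # post1" by (meson split_list)
      have "xs' @ u # ys @ w # zs = (xs' @ [u]) @ ys @ w # zs" by simp
      then have eq: "pre @ y # post = pre1 @ y # (post1 @ ys @ w # zs)" using h2 sp by simp
      have dxu: "distinct (xs' @ [u])" using d Cons by auto
      then have "distinct (pre1 @ y # post1)" by (simp only: sp)
      then have "y \<notin> set pre1" by simp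
      then have pre: "pre = pre1" by (rule split_unique[OF ypre(1) _ eq])
      have "u \<notin> set pre1"
      proof -
        have "last (xs' @ [u]) = last (pre1 @ y # post1)" by (simp only: sp)
        then have "u = last (y # post1)" by simp
        then have "u \<in> set (y # post1)" by (metis last_in_set list.distinct(1))
        then show ?thesis using \<open>distinct (pre1 @ y # post1)\<close> by auto
      qed
      moreover have "set pre1 \<subseteq> set xs' \<union> {u}"
      proof -
        have "set (xs' @ [u]) = set (pre1 @ y # post1)" by (simp only: sp)
        then show ?thesis by auto
      qed
      ultimately have sub: "set pre1 \<subseteq> set xs" using Cons by auto
      have mp: "map (qd ?vs) pre1 = map (qd ?p2) pre1" using q(2) sub by (intro map_eq_on) auto
      have p2: "?p2 = x0 # pre1 @ y # (post1 @ w # zs)" using sp Cons by simp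
      have yp2: "y \<in> set ?p2" using y Cons by auto
      show ?thesis unfolding s0 pre mp adj_p2[OF d E x0in yp2] using F1all_D0[OF F2 p2] .
    next
      assume y: "y \<in> set ys"
      then obtain ys1 ys2 where sp: "ys = ys1 @ y # ys2" by (meson split_list)
      have "pre @ y # post = (xs' @ u # ys1) @ y # (ys2 @ w # zs)" using h2 sp by simp
      moreover have "y \<notin> set (xs' @ u # ys1)" using d sp Cons by auto
      ultimately have pre: "pre = xs' @ [u] @ ys1" using split_unique[OF ypre(1)] by simp
      have m1: "map (qd ?vs) ys1 = map (qd ?p1) ys1" using q(1) sp by (intro map_eq_on) auto
      have m2: "map (qd ?vs) xs' = map (qd ?p2) xs'" using q(2) Cons by (intro map_eq_on) auto
      have qu: "qd ?vs u = qd ?p1 u + qd ?p2 u" using q(3) by auto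
      have c: "?c = e11 (mm (prodL (map (qd ?p1) ys1)) (Mx (qd ?p1 u))) * e11 (prodL (map (qd ?p2) xs'))
          + e11 (prodL (map (qd ?p1) ys1)) * e11 (mm (Mx (qd ?p2 u)) (prodL (map (qd ?p2) xs')))"
        unfolding pre map_append list.map prodL3 m1 m2 qu glue_A2 by simp
      have T1: "e11 (mm (prodL (map (qd ?p1) ys1)) (Mx (qd ?p1 u))) \<ge> 1"
      proof -
        have "rotate (length (u # ys)) ?p1 = w # (u # ys1) @ y # ys2" by (simp only: rot_p1) (simp add: sp)
        from F1all_D[OF F1 this] show ?thesis by simp
      qed
      have T2: "e11 (prodL (map (qd ?p2) xs')) \<ge> 1"
        using F1all_D0[OF F2, of x0 xs' u "w # zs"] Cons by simp
      have T3: "e11 (prodL (map (qd ?p1) ys1)) \<ge> 1"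
        using F1all_D0[OF F1, of u ys1 y "ys2 @ [w]"] sp by simp
      have T4: "e11 (mm (Mx (qd ?p2 u)) (prodL (map (qd ?p2) xs'))) \<ge> 1"
        using F1all_D0[OF F2, of x0 "xs' @ [u]" w zs] Cons by (simp add: prodL_snoc)
      have "?c \<ge> 2" unfolding c using T1 T2 T3 T4
        by (smt (verit) mult_le_cancel_left1 mult_le_cancel_right1)
      moreover have "\<not> adjL ?vs s0 y" using adj_p3[OF d cr y, of s0] Cons s0 adjL_sym by auto
      ultimately show ?thesis by simp
    next
      assume y: "y = w"
      have "pre @ y # post = (xs' @ u # ys) @ y # zs" using h2 y by simp
      moreover have "y \<notin> set (xs' @ u # ys)" using d y Cons by auto
      ultimately have pre: "pre = xs' @ [u] @ ys" using split_unique[OF ypre(1)] by simp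
      have m1: "map (qd ?vs) ys = map (qd ?p1) ys" using q(1) by (intro map_eq_on) auto
      have m2: "map (qd ?vs) xs' = map (qd ?p2) xs'" using q(2) Cons by (intro map_eq_on) auto
      have qu: "qd ?vs u = qd ?p1 u + qd ?p2 u" using q(3) by auto
      have c: "?c = e11 (mm (Mx (qd ?p2 u)) (prodL (map (qd ?p2) xs')))"
        unfolding pre map_append list.map prodL3 m1 m2 qu by (rule glue_A3[OF CC1_form[OF CC1]])
      have "?p2 = x0 # (xs' @ [u]) @ w # zs" using Cons by simp
      from F1all_D0[OF F2 this] have "e11 (prodL (map (qd ?p2) (xs' @ [u]))) \<ge> 1 \<and>
          (e11 (prodL (map (qd ?p2) (xs' @ [u]))) = 1 \<longleftrightarrow> adjL ?p2 x0 w)" .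
      moreover have "adjL ?vs x0 w = adjL ?p2 x0 w" using adj_p2[OF d E x0in] by simp
      ultimately show ?thesis using c s0 y by (simp add: prodL_snoc)
    next
      assume y: "y \<in> set zs"
      then obtain zs1 zs2 where sp: "zs = zs1 @ y # zs2" by (meson split_list)
      have "pre @ y # post = (xs' @ u # ys @ w # zs1) @ y # zs2" using h2 sp by simp
      moreover have "y \<notin> set (xs' @ u # ys @ w # zs1)" using d sp Cons by auto
      ultimately have pre: "pre = xs' @ [u] @ ys @ [w] @ zs1" using split_unique[OF ypre(1)] by simp
      have "prodL (map (qd ?vs) (xs' @ [u] @ ys @ [w] @ zs1)) = prodL (map (qd ?p2) (xs' @ [u] @ [] @ [w] @ zs1))"
        by (rule prod_outer[OF d E cr CC1]) (use Cons sp in auto)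
      then have c: "?c = e11 (prodL (map (qd ?p2) (xs' @ [u, w] @ zs1)))" unfolding pre by simp
      have "?p2 = x0 # (xs' @ [u, w] @ zs1) @ y # zs2" using Cons sp by simp
      from F1all_D0[OF F2 this] c adj_p2[OF d E x0in, of y] y s0 show ?thesis by simp
    qed
  next
    case Nil
    then have s0: "s0 = u" and h2: "pre @ y # post = ys @ w # zs" using h by auto
    have yin: "y \<in> set (ys @ [w]) \<or> y \<in> set zs"
    proof -
      have "y \<in> set (pre @ y # post)" by simp
      then show ?thesis unfolding h2 by auto
    qed
    have uin: "u \<in> set ?p1" by simp
    from yin show ?thesis
    proof (elim disjE)
      assume y: "y \<in> set (ys @ [w])"
      then obtain pre1 post1 where sp: "ys @ [w] = pre1 @ y # post1" by (meson split_list)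
      have "ys @ w # zs = (ys @ [w]) @ zs" by simp
      then have eq: "pre @ y # post = pre1 @ y # (post1 @ zs)" using h2 sp by simp
      have dyw: "distinct (ys @ [w])" using d by auto
      then have "distinct (pre1 @ y # post1)" by (simp only: sp)
      then have "y \<notin> set pre1" by simp
      then have pre: "pre = pre1" by (rule split_unique[OF ypre(1) _ eq])
      have "w \<notin> set pre1"
      proof -
        have "last (ys @ [w]) = last (pre1 @ y # post1)" by (simp only: sp)
        then have "w = last (y # post1)" by simp
        then have "w \<in> set (y # post1)" by (metis last_in_set list.distinct(1))
        then show ?thesis using \<open>distinct (pre1 @ y # post1)\<close> by auto
      qed
      moreover have "set pre1 \<subseteq> set ys \<union> {w}"
      proof -
        have "set (ys @ [w]) = set (pre1 @ y # post1)" by (simp only: sp)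
        then show ?thesis by auto
      qed
      ultimately have sub: "set pre1 \<subseteq> set ys" by auto
      have mp: "map (qd ?vs) pre1 = map (qd ?p1) pre1" using q(1) sub by (intro map_eq_on) auto
      have p1: "?p1 = u # pre1 @ y # post1" using sp by simp
      have yp1: "y \<in> set ?p1" using y by auto
      show ?thesis unfolding s0 pre mp adj_p1[OF d E uin yp1] using F1all_D0[OF F1 p1] .
    next
      assume y: "y \<in> set zs"
      then obtain zs1 zs2 where sp: "zs = zs1 @ y # zs2" by (meson split_list)
      have "pre @ y # post = (ys @ w # zs1) @ y # zs2" using h2 sp by simp
      moreover have "y \<notin> set (ys @ w # zs1)" using d sp Nil by auto
      ultimately have pre: "pre = ys @ [w] @ zs1" using split_unique[OF ypre(1)] by simp
      have m1: "map (qd ?vs) ys = map (qd ?p1) ys" using q(1) by (intro map_eq_on) auto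
      have m2: "map (qd ?vs) zs1 = map (qd ?p2) zs1" using q(2) sp by (intro map_eq_on) auto
      have qw: "qd ?vs w = qd ?p1 w + qd ?p2 w" using q(3) by auto
      have c: "?c = e11 (mm (prodL (map (qd ?p2) zs1)) (Mx (qd ?p2 w)))"
        unfolding pre map_append list.map prodL3 m1 m2 qw mm_assoc
        by (rule glue_B2[OF CC1_form[OF CC1]])
      have "?p2 = u # (w # zs1) @ y # zs2" using Nil sp by simp
      from F1all_D0[OF F2 this] c adj_p2[OF d E, of u y] y s0 Nil show ?thesis by simp
    qed
  qed
qed

end



lemma rot_lt: "k < length L \<Longrightarrow> rotate k L = drop k L @ take k L"
  by (simp add: rotate_drop_take)

context symrel begin

lemma step_F1all:
  assumes d: "distinct (xs @ u # ys @ w # zs)" and E: "E u w"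
    and cr: "\<forall>a\<in>set ys. \<forall>b\<in>set xs \<union> set zs. \<not> E a b"
    and CC1: "CC (u # ys @ [w])" and CC2: "CC (xs @ [u, w] @ zs)"
    and F1: "F1all (u # ys @ [w])" and F2: "F1all (xs @ [u, w] @ zs)"
  shows "F1all (xs @ u # ys @ w # zs)"
  unfolding F1all_def
proof
  fix n
  let ?vs = "xs @ u # ys @ w # zs" and ?p1 = "u # ys @ [w]" and ?p2 = "xs @ [u, w] @ zs"
  define k where "k = n mod length ?vs"
  have kl: "k < length ?vs" unfolding k_def by simp
  have rk: "rotate n ?vs = drop k ?vs @ take k ?vs" unfolding k_def by (rule rotate_drop_take)
  have dr: "distinct (rotate n ?vs)" using d by simp
  consider "k \<le> length xs" | "length xs < k" "k \<le> length xs + 1 + length ys" | "length xs + 1 + length ys < k"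
    by linarith
  then show "F1 (rotate n ?vs)"
  proof cases
    case 1
    have r: "rotate n ?vs = drop k xs @ u # ys @ w # (zs @ take k xs)" using 1 unfolding rk by simp
    have p2: "drop k xs @ [u, w] @ (zs @ take k xs) = rotate k ?p2"
    proof -
      have "rotate k ?p2 = drop k ?p2 @ take k ?p2" using 1 by (intro rot_lt) simp
      also have "\<dots> = drop k xs @ [u, w] @ (zs @ take k xs)" using 1 by simp
      finally show ?thesis by simp
    qed
    have cr': "\<forall>a\<in>set ys. \<forall>b\<in>set (drop k xs) \<union> set (zs @ take k xs). \<not> E a b"
      using cr by (auto dest: in_set_dropD in_set_takeD)
    have C2: "CC (drop k xs @ [u, w] @ (zs @ take k xs))" unfolding p2 by (rule CC_rotate[OF CC2])
    have G2: "F1all (drop k xs @ [u, w] @ (zs @ take k xs))" unfolding p2 by (rule F1all_rotate[OF F2])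
    have dr': "distinct (drop k xs @ u # ys @ w # (zs @ take k xs))" using dr r by simp
    show ?thesis unfolding r by (rule step_F1[OF dr' E cr' CC1 C2 F1 G2])
  next
    case 2
    define j where "j = k - length xs - 1"
    have j: "j \<le> length ys" "k = length xs + 1 + j" using 2 unfolding j_def by auto
    have r: "rotate n ?vs = drop j ys @ w # (zs @ xs) @ u # take j ys" using j unfolding rk by simp
    have p1: "w # (zs @ xs) @ [u] = rotate (length xs + 1) ?p2" using rot_w2[of xs u w zs] by simp
    have p2: "drop j ys @ [w, u] @ take j ys = rotate (j + 1) ?p1"
    proof -
      have "rotate (j+1) ?p1 = drop (j+1) ?p1 @ take (j+1) ?p1" using j by (intro rot_lt) simp
      also have "\<dots> = drop j ys @ [w,u] @ take j ys" using j by simp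
      finally show ?thesis by simp
    qed
    have cr'': "\<forall>a\<in>set (zs @ xs). \<forall>b\<in>set (drop j ys) \<union> set (take j ys). \<not> E a b"
      using cr Esym by (auto dest: in_set_dropD in_set_takeD)
    have E': "E w u" using E Esym by simp
    have C1: "CC (w # (zs @ xs) @ [u])" unfolding p1 by (rule CC_rotate[OF CC2])
    have G1: "F1all (w # (zs @ xs) @ [u])" unfolding p1 by (rule F1all_rotate[OF F2])
    have C2: "CC (drop j ys @ [w, u] @ take j ys)" unfolding p2 by (rule CC_rotate[OF CC1])
    have G2: "F1all (drop j ys @ [w, u] @ take j ys)" unfolding p2 by (rule F1all_rotate[OF F1])
    have dr': "distinct (drop j ys @ w # (zs @ xs) @ u # take j ys)" using dr r by simp
    show ?thesis unfolding r by (rule step_F1[OF dr' E' cr'' C1 C2 G1 G2])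
  next
    case 3
    define j where "j = k - length xs - length ys - 2"
    have j: "j < length zs" "k = length xs + length ys + 2 + j" using 3 kl unfolding j_def by auto
    have r: "rotate n ?vs = (drop j zs @ xs) @ u # ys @ w # take j zs" using j unfolding rk by simp
    have p2: "(drop j zs @ xs) @ [u, w] @ take j zs = rotate (length xs + 2 + j) ?p2"
    proof -
      have "rotate (length xs + 2 + j) ?p2 = drop (length xs + 2 + j) ?p2 @ take (length xs + 2 + j) ?p2" using j by (intro rot_lt) simp
      also have "\<dots> = (drop j zs @ xs) @ [u, w] @ take j zs" using j by simp
      finally show ?thesis by simp
    qed
    have cr': "\<forall>a\<in>set ys. \<forall>b\<in>set (drop j zs @ xs) \<union> set (take j zs). \<not> E a b"
      using cr by (auto dest: in_set_dropD in_set_takeD)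
    have C2: "CC ((drop j zs @ xs) @ [u, w] @ take j zs)" unfolding p2 by (rule CC_rotate[OF CC2])
    have G2: "F1all ((drop j zs @ xs) @ [u, w] @ take j zs)" unfolding p2 by (rule F1all_rotate[OF F2])
    have dr': "distinct ((drop j zs @ xs) @ u # ys @ w # take j zs)" using dr r by simp
    show ?thesis unfolding r by (rule step_F1[OF dr' E cr' CC1 C2 F1 G2])
  qed
qed

theorem V_props: "V vs \<Longrightarrow> CC vs \<and> F1all vs"
proof (induct rule: V.induct)
  case (base2 x y) then show ?case using CC_two F1all_two by simp
next
  case (base3 x y z) then show ?case using CC_three F1all_three by simp
next
  case (step xs u ys w zs)
  then show ?case using step_CC step_F1all by blast
qed

end



context symrel begin

lemma interval_V:
  fixes f :: "int \<Rightarrow> 'a" and G :: "int \<Rightarrow> int \<Rightarrow> bool"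
  assumes injf: "inj f"
  and EG: "\<And>a b. E (f a) (f b) \<longleftrightarrow> G a b \<or> G b a"
  and Garc: "\<And>a b. G a b \<Longrightarrow> a \<le> b - 2"
  and Gnc: "\<And>a b c d. G a b \<Longrightarrow> G c d \<Longrightarrow> \<not>(a<c \<and> c<b \<and> b<d)"
  and Gmax: "\<And>a b. p0 \<le> a \<Longrightarrow> b \<le> r0 \<Longrightarrow> a \<le> b-2 \<Longrightarrow> \<not> G a b \<Longrightarrow>
               \<exists>c d. G c d \<and> ((a<c \<and> c<b \<and> b<d) \<or> (c<a \<and> a<d \<and> d<b))"
  shows "p0 \<le> p \<Longrightarrow> r \<le> r0 \<Longrightarrow> p < r \<Longrightarrow> (r = p+1 \<or> G p r) \<Longrightarrow> V (map f [p..r])"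
proof (induct "nat (r - p)" arbitrary: p r rule: less_induct)
  case less
  note IH = less.hyps
  have df: "\<And>i j. distinct (map f [i..j])" using inj_on_subset[OF injf subset_UNIV] by (simp add: distinct_map)
  show ?case
  proof (cases "r = p + 1")
    case True
    then have "[p..r] = [p, r]" using upto_rec1[of p r] by simp
    moreover have "f p \<noteq> f r" using True injf by (simp add: inj_eq)
    ultimately show ?thesis by (simp add: V.base2)
  next
    case False
    with less.prems have Gpr: "G p r" and pr2: "p + 2 \<le> r" by (auto dest: Garc)
    define M where "M = {m. p < m \<and> m < r \<and> (m = p+1 \<or> G p m)}"
    have finM: "finite M" unfolding M_def by (rule finite_subset[of _ "{p..r}"]) auto
    have "p + 1 \<in> M" unfolding M_def using pr2 by auto
    define m where "m = Max M"
    have mM: "m \<in> M" unfolding m_def using finM \<open>p+1 \<in> M\<close> by (intro Max_in) auto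
    have mmax: "\<And>m'. m' \<in> M \<Longrightarrow> m' \<le> m" unfolding m_def using finM by simp
    from mM have m1: "p < m" "m < r" "m = p + 1 \<or> G p m" unfolding M_def by auto
    have mr: "m = r - 1 \<or> G m r"
    proof (rule ccontr)
      assume "\<not> (m = r - 1 \<or> G m r)"
      then have a: "m \<le> r - 2" "\<not> G m r" using m1 by auto
      obtain c d where cd: "G c d" "(m<c \<and> c<r \<and> r<d) \<or> (c<m \<and> m<d \<and> d<r)"
        using Gmax[of m r] a less.prems m1 by auto
      from cd(2) show False
      proof
        assume "m<c \<and> c<r \<and> r<d"
        then show False using Gnc[OF Gpr cd(1)] m1 by auto
      next
        assume h: "c<m \<and> m<d \<and> d<r"
        consider "c < p" | "c = p" | "p < c" by linarith
        then show False
        proof cases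
          case 1 then show False using Gnc[OF cd(1) Gpr] h m1 by auto
        next
          case 2
          then have "d \<in> M" unfolding M_def using cd(1) h m1 by auto
          then show False using mmax h by fastforce
        next
          case 3
          then have Gpm': "G p m" using m1 h by auto
          show False using Gnc[OF Gpm' cd(1)] h 3 by auto
        qed
      qed
    qed
    have sub: "V (map f [p..m] @ [f r])"
    proof (cases "m = p + 1")
      case True
      then have "map f [p..m] @ [f r] = [f p, f m, f r]" using upto_rec1[of p m] by simp
      moreover have "distinct [f p, f m, f r]" using injf m1 by (auto simp: inj_eq)
      ultimately show ?thesis by (simp add: V.base3)
    next
      case False
      then have Gpm: "G p m" using m1 by auto
      have l: "map f [p..m] @ [f r] = [] @ f p # map f [p+1..m-1] @ f m # [f r]"
        using m1 False by (simp add: upto_rec1[of p m] upto_rec2[of "p+1" m])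
      have d: "distinct ([] @ f p # map f [p+1..m-1] @ f m # [f r])"
      proof -
        have "distinct (p # [p+1..m-1] @ [m, r])" using m1 by auto
        then have "distinct (map f (p # [p+1..m-1] @ [m, r]))" using inj_on_subset[OF injf subset_UNIV] by (simp only: distinct_map)
        then show ?thesis by simp
      qed
      have V1: "V (f p # map f [p+1..m-1] @ [f m])"
      proof -
        have "V (map f [p..m])" by (rule IH) (use less.prems m1 Gpm in auto)
        moreover have "map f [p..m] = f p # map f [p+1..m-1] @ [f m]" using m1 False by (simp add: upto_rec1[of p m] upto_rec2[of "p+1" m])
        ultimately show ?thesis by simp
      qed
      have V2: "V ([] @ [f p, f m] @ [f r])" using injf m1 by (auto intro!: V.base3 simp: inj_eq)
      have cr: "\<forall>a\<in>set (map f [p+1..m-1]). \<forall>b\<in>set [] \<union> set [f r]. \<not> E a b"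
      proof (intro ballI)
        fix a b assume a: "a \<in> set (map f [p+1..m-1])" and b: "b \<in> set [] \<union> set [f r]"
        then obtain y where y: "a = f y" "p < y" "y < m" by auto
        have "\<not> G y r" using Gnc[OF Gpm] y m1 by blast
        moreover have "\<not> G r y" using Garc y m1 by force
        ultimately show "\<not> E a b" using b y EG by auto
      qed
      have "E (f p) (f m)" using EG Gpm by auto
      from V.step[OF d this cr V1 V2] l show ?thesis by simp
    qed
    show ?thesis
    proof (cases "m = r - 1")
      case True
      then have "map f [p..r] = map f [p..m] @ [f r]" using m1 by (simp add: upto_rec2[of p r])
      then show ?thesis using sub by simp
    next
      case False
      then have Gmr: "G m r" using mr by auto
      have l: "map f [p..r] = map f [p..m-1] @ f m # map f [m+1..r-1] @ f r # []"
        using m1 by (simp add: upto_split3[of p m r] upto_rec2[of "m+1" r])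
      have d: "distinct (map f [p..m-1] @ f m # map f [m+1..r-1] @ f r # [])" using l df by metis
      have V1: "V (f m # map f [m+1..r-1] @ [f r])"
      proof -
        have "V (map f [m..r])" by (rule IH) (use less.prems m1 Gmr in auto)
        moreover have "map f [m..r] = f m # map f [m+1..r-1] @ [f r]" using m1 by (simp add: upto_rec1[of m r] upto_rec2[of "m+1" r])
        ultimately show ?thesis by simp
      qed
      have V2: "V (map f [p..m-1] @ [f m, f r] @ [])"
      proof -
        have "map f [p..m] = map f [p..m-1] @ [f m]" using m1 by (simp add: upto_rec2[of p m])
        then show ?thesis using sub by simp
      qed
      have cr: "\<forall>a\<in>set (map f [m+1..r-1]). \<forall>b\<in>set (map f [p..m-1]) \<union> set []. \<not> E a b"
      proof (intro ballI)
        fix a b assume a: "a \<in> set (map f [m+1..r-1])" and b: "b \<in> set (map f [p..m-1]) \<union> set []"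
        then obtain y z where y: "a = f y" "m < y" "y < r" and z: "b = f z" "z < m" by auto
        have "\<not> G z y" using Gnc[of z y m r] Gmr y z by auto
        moreover have "\<not> G y z" using Garc y z by force
        ultimately show "\<not> E a b" using y z EG by auto
      qed
      have "E (f m) (f r)" using EG Gmr by auto
      from V.step[OF d this cr V1 V2] l show ?thesis by simp
    qed
  qed
qed

end



definition Ee :: "arc set \<Rightarrow> vtx \<Rightarrow> vtx \<Rightarrow> bool" where
  "Ee T x y \<longleftrightarrow> (\<exists>a\<in>T. ends a = {x, y})"

locale strip =
  fixes T :: "arc set"
  assumes tri: "strip_triangulation T"

sublocale strip \<subseteq> symrel "Ee T"
  by unfold_locales (auto simp: Ee_def insert_commute)

context strip begin

lemma arcT: "x \<in> T \<Longrightarrow> is_arc x" using tri by (auto simp: strip_triangulation_def)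
lemma ncT: "x \<in> T \<Longrightarrow> y \<in> T \<Longrightarrow> \<not> crosses x y" using tri by (auto simp: strip_triangulation_def)
lemma mxT: "is_arc x \<Longrightarrow> x \<notin> T \<Longrightarrow> \<exists>y\<in>T. crosses x y" using tri by (auto simp: strip_triangulation_def)
lemma enT1: "\<exists>p q. Conn p q \<in> T \<and> p < i \<and> q > j" using tri by (auto simp: strip_triangulation_def)
lemma enT2: "\<exists>p q. Conn p q \<in> T \<and> p > i \<and> q < j" using tri by (auto simp: strip_triangulation_def)

lemma Ee_TT: "Ee T (Top a) (Top b) \<longleftrightarrow> Up a b \<in> T \<or> Up b a \<in> T"
proof
  assume "Ee T (Top a) (Top b)"
  then obtain x where x: "x \<in> T" "ends x = {Top a, Top b}" by (auto simp: Ee_def)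
  then show "Up a b \<in> T \<or> Up b a \<in> T"
    by (cases x) (auto simp: doubleton_eq_iff)
next
  assume "Up a b \<in> T \<or> Up b a \<in> T"
  then show "Ee T (Top a) (Top b)" unfolding Ee_def by (metis ends.simps(2) insert_commute)
qed

lemma Ee_BB: "Ee T (Bot a) (Bot b) \<longleftrightarrow> Low a b \<in> T \<or> Low b a \<in> T"
proof
  assume "Ee T (Bot a) (Bot b)"
  then obtain x where x: "x \<in> T" "ends x = {Bot a, Bot b}" by (auto simp: Ee_def)
  then show "Low a b \<in> T \<or> Low b a \<in> T"
    by (cases x) (auto simp: doubleton_eq_iff)
next
  assume "Low a b \<in> T \<or> Low b a \<in> T"
  then show "Ee T (Bot a) (Bot b)" unfolding Ee_def by (metis ends.simps(3) insert_commute)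
qed

lemma Ee_TB: "Ee T (Top a) (Bot b) \<longleftrightarrow> Conn a b \<in> T"
proof
  assume "Ee T (Top a) (Bot b)"
  then obtain x where x: "x \<in> T" "ends x = {Top a, Bot b}" by (auto simp: Ee_def)
  then show "Conn a b \<in> T"
    by (cases x) (auto simp: doubleton_eq_iff)
next
  assume "Conn a b \<in> T"
  then show "Ee T (Top a) (Bot b)" unfolding Ee_def by (metis ends.simps(1))
qed

lemma Ee_BT: "Ee T (Bot b) (Top a) \<longleftrightarrow> Conn a b \<in> T"
  using Ee_TB Esym by blast

lemma conn_mono: "Conn a b \<in> T \<Longrightarrow> Conn c d \<in> T \<Longrightarrow> (a - c) * (b - d) \<le> 0"
  using ncT[of "Conn a b" "Conn c d"] by simp

lemma conn_mono': "Conn a b \<in> T \<Longrightarrow> Conn c d \<in> T \<Longrightarrow> a < c \<Longrightarrow> d \<le> b"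
  using conn_mono[of a b c d] by (auto simp: mult_le_0_iff)

lemma conn_mono'': "Conn a b \<in> T \<Longrightarrow> Conn c d \<in> T \<Longrightarrow> b < d \<Longrightarrow> c \<le> a"
  using conn_mono[of a b c d] by (auto simp: mult_le_0_iff)

lemma Up_arc: "Up a b \<in> T \<Longrightarrow> a \<le> b - 2" using arcT by fastforce
lemma Low_arc: "Low a b \<in> T \<Longrightarrow> a \<le> b - 2" using arcT by fastforce

lemma V_top: assumes "Up p r \<in> T" shows "V (map Top [p..r])"
proof (rule interval_V[where G = "\<lambda>a b. Up a b \<in> T" and p0 = p and r0 = r])
  show "inj Top" by (simp add: inj_def)
  show "\<And>a b. Ee T (Top a) (Top b) \<longleftrightarrow> Up a b \<in> T \<or> Up b a \<in> T" by (rule Ee_TT)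
  show "\<And>a b. Up a b \<in> T \<Longrightarrow> a \<le> b - 2" by (rule Up_arc)
  show "\<And>a b c d. Up a b \<in> T \<Longrightarrow> Up c d \<in> T \<Longrightarrow> \<not>(a<c \<and> c<b \<and> b<d)"
    using ncT by fastforce
  show "\<And>a b. p \<le> a \<Longrightarrow> b \<le> r \<Longrightarrow> a \<le> b-2 \<Longrightarrow> Up a b \<notin> T \<Longrightarrow>
               \<exists>c d. Up c d \<in> T \<and> ((a<c \<and> c<b \<and> b<d) \<or> (c<a \<and> a<d \<and> d<b))"
  proof -
    fix a b assume h: "p \<le> a" "b \<le> r" "a \<le> b-2" "Up a b \<notin> T"
    then obtain y where y: "y \<in> T" "crosses (Up a b) y" using mxT[of "Up a b"] by auto
    show "\<exists>c d. Up c d \<in> T \<and> ((a<c \<and> c<b \<and> b<d) \<or> (c<a \<and> a<d \<and> d<b))"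
    proof (cases y)
      case (Conn c d)
      then have "p < c \<and> c < r" using y h by auto
      then have "crosses (Up p r) y" using Conn by simp
      then show ?thesis using ncT[OF assms y(1)] by simp
    next
      case (Up c d) then show ?thesis using y by auto
    next
      case (Low c d) then show ?thesis using y by simp
    qed
  qed
  show "p \<le> p" "r \<le> r" by auto
  show "p < r" using Up_arc[OF assms] by simp
  show "r = p + 1 \<or> Up p r \<in> T" using assms by simp
qed

lemma V_bot: assumes "Low s q \<in> T" shows "V (map Bot [s..q])"
proof (rule interval_V[where G = "\<lambda>a b. Low a b \<in> T" and p0 = s and r0 = q])
  show "inj Bot" by (simp add: inj_def)
  show "\<And>a b. Ee T (Bot a) (Bot b) \<longleftrightarrow> Low a b \<in> T \<or> Low b a \<in> T" by (rule Ee_BB)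
  show "\<And>a b. Low a b \<in> T \<Longrightarrow> a \<le> b - 2" by (rule Low_arc)
  show "\<And>a b c d. Low a b \<in> T \<Longrightarrow> Low c d \<in> T \<Longrightarrow> \<not>(a<c \<and> c<b \<and> b<d)"
    using ncT by fastforce
  show "\<And>a b. s \<le> a \<Longrightarrow> b \<le> q \<Longrightarrow> a \<le> b-2 \<Longrightarrow> Low a b \<notin> T \<Longrightarrow>
               \<exists>c d. Low c d \<in> T \<and> ((a<c \<and> c<b \<and> b<d) \<or> (c<a \<and> a<d \<and> d<b))"
  proof -
    fix a b assume h: "s \<le> a" "b \<le> q" "a \<le> b-2" "Low a b \<notin> T"
    then obtain y where y: "y \<in> T" "crosses (Low a b) y" using mxT[of "Low a b"] by auto
    show "\<exists>c d. Low c d \<in> T \<and> ((a<c \<and> c<b \<and> b<d) \<or> (c<a \<and> a<d \<and> d<b))"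
    proof (cases y)
      case (Conn c d)
      then have "s < d \<and> d < q" using y h by auto
      then have "crosses (Low s q) y" using Conn by simp
      then show ?thesis using ncT[OF assms y(1)] by simp
    next
      case (Low c d) then show ?thesis using y by auto
    next
      case (Up c d) then show ?thesis using y by simp
    qed
  qed
  show "s \<le> s" "q \<le> q" by auto
  show "s < q" using Low_arc[OF assms] by simp
  show "q = s + 1 \<or> Low s q \<in> T" using assms by simp
qed

end



context strip begin

definition inter :: "int \<Rightarrow> int \<Rightarrow> int \<Rightarrow> int \<Rightarrow> int \<Rightarrow> int \<Rightarrow> bool" where
  "inter p q r s a b \<longleftrightarrow> Conn a b \<in> T \<and> p \<le> a \<and> a \<le> r \<and> s \<le> b \<and> b \<le> q \<and> (a, b) \<noteq> (p, q) \<and> (a, b) \<noteq> (r, s)"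

lemma noint_eq:
  assumes c1: "Conn p q \<in> T" and c2: "Conn r s \<in> T" and "p \<le> r" "s \<le> q"
    and ni: "\<not> (\<exists>a b. inter p q r s a b)"
  shows "p = r \<or> q = s"
proof (rule ccontr)
  assume "\<not> (p = r \<or> q = s)"
  then have pr: "p < r" "s < q" using assms by auto
  have "Conn p s \<notin> T"
  proof
    assume "Conn p s \<in> T"
    then have "inter p q r s p s" unfolding inter_def using pr by auto
    with ni show False by blast
  qed
  then obtain y where y: "y \<in> T" "crosses (Conn p s) y" using mxT[of "Conn p s"] by auto
  show False
  proof (cases y)
    case (Conn a b)
    have m1: "(a - p) * (b - q) \<le> 0" using conn_mono[OF _ c1, of a b] y Conn by simp
    have m2: "(a - r) * (b - s) \<le> 0" using conn_mono[OF _ c2, of a b] y Conn by simp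
    have cr: "(p - a) * (s - b) > 0" using y Conn by simp
    from cr have "(a > p \<and> b > s) \<or> (a < p \<and> b < s)" by (auto simp: zero_less_mult_iff)
    then show False
    proof
      assume h: "a > p \<and> b > s"
      then have "a \<le> r" using m2 by (auto simp: mult_le_0_iff)
      moreover have "b \<le> q" using m1 h by (auto simp: mult_le_0_iff)
      ultimately have "inter p q r s a b" unfolding inter_def using h y Conn by auto
      then show False using ni by blast
    next
      assume h: "a < p \<and> b < s"
      then have "b \<ge> q" using m1 by (auto simp: mult_le_0_iff)
      then show False using h pr by simp
    qed
  next
    case (Up c d)
    then have "crosses (Conn p q) y" using y by simp
    then show False using ncT[OF c1 y(1)] by simp
  next
    case (Low c d)
    then have "crosses (Conn r s) y" using y by simp
    then show False using ncT[OF c2 y(1)] by simp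
  qed
qed

lemma noint_low:
  assumes c1: "Conn p q \<in> T" and c2: "Conn p s \<in> T" and "s + 2 \<le> q"
    and ni: "\<not> (\<exists>a b. inter p q p s a b)"
  shows "Low s q \<in> T"
proof (rule ccontr)
  assume "Low s q \<notin> T"
  then obtain y where y: "y \<in> T" "crosses (Low s q) y" using mxT[of "Low s q"] assms by auto
  show False
  proof (cases y)
    case (Conn a b)
    then have h: "s < b" "b < q" using y by auto
    have "p \<le> a" using conn_mono''[of a b p q] y Conn c1 h by auto
    moreover have "a \<le> p" using conn_mono''[of p s a b] y Conn c2 h by auto
    ultimately have "inter p q p s a b" unfolding inter_def using h y Conn by auto
    then show False using ni by blast
  next
    case (Low c d)
    then have "(s<c \<and> c<q \<and> q<d) \<or> (c<s \<and> s<d \<and> d<q)" using y by auto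
    then show False
    proof
      assume "s<c \<and> c<q \<and> q<d"
      then have "crosses (Conn p q) y" using Low by simp
      then show False using ncT[OF c1 y(1)] by simp
    next
      assume "c<s \<and> s<d \<and> d<q"
      then have "crosses (Conn p s) y" using Low by simp
      then show False using ncT[OF c2 y(1)] by simp
    qed
  next
    case (Up c d) then show False using y by simp
  qed
qed

lemma noint_up:
  assumes c1: "Conn p q \<in> T" and c2: "Conn r q \<in> T" and "p + 2 \<le> r"
    and ni: "\<not> (\<exists>a b. inter p q r q a b)"
  shows "Up p r \<in> T"
proof (rule ccontr)
  assume "Up p r \<notin> T"
  then obtain y where y: "y \<in> T" "crosses (Up p r) y" using mxT[of "Up p r"] assms by auto
  show False
  proof (cases y)
    case (Conn a b)
    then have h: "p < a" "a < r" using y by auto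
    have "b \<le> q" using conn_mono'[of p q a b] y Conn c1 h by auto
    moreover have "q \<le> b" using conn_mono'[of a b r q] y Conn c2 h by auto
    ultimately have "inter p q r q a b" unfolding inter_def using h y Conn by auto
    then show False using ni by blast
  next
    case (Up c d)
    then have "(p<c \<and> c<r \<and> r<d) \<or> (c<p \<and> p<d \<and> d<r)" using y by auto
    then show False
    proof
      assume "p<c \<and> c<r \<and> r<d"
      then have "crosses (Conn r q) y" using Up by simp
      then show False using ncT[OF c2 y(1)] by simp
    next
      assume "c<p \<and> p<d \<and> d<r"
      then have "crosses (Conn p q) y" using Up by simp
      then show False using ncT[OF c1 y(1)] by simp
    qed
  next
    case (Low c d) then show False using y by simp
  qed
qed

lemma poly_distinct: "distinct (poly_verts p q r s)"
  by (auto simp: poly_verts_def distinct_map inj_on_def)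

end



context strip begin

lemma V_poly: "Conn p q \<in> T \<Longrightarrow> Conn r s \<in> T \<Longrightarrow> p \<le> r \<Longrightarrow> s \<le> q \<Longrightarrow> V (poly_verts p q r s)"
proof (induct "nat ((r - p) + (q - s))" arbitrary: p q r s rule: less_induct)
  case less
  show ?case
  proof (cases "\<exists>a b. inter p q r s a b")
    case True
    then obtain a b where ab: "inter p q r s a b" by blast
    then have ab': "Conn a b \<in> T" "p \<le> a" "a \<le> r" "s \<le> b" "b \<le> q" "(a, b) \<noteq> (p, q)" "(a, b) \<noteq> (r, s)"
      unfolding inter_def by auto
    have l: "poly_verts p q r s = map Top [p..a-1] @ Top a # (map Top [a+1..r] @ map Bot [s..b-1]) @ Bot b # map Bot [b+1..q]"
      unfolding poly_verts_def using ab' by (simp add: upto_split3[of p a r] upto_split3[of s b q])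
    have p1: "Top a # (map Top [a+1..r] @ map Bot [s..b-1]) @ [Bot b] = poly_verts a b r s"
      unfolding poly_verts_def using ab' by (simp add: upto_rec1[of a r] upto_rec2[of s b])
    have p2: "map Top [p..a-1] @ [Top a, Bot b] @ map Bot [b+1..q] = poly_verts p q a b"
      unfolding poly_verts_def using ab' by (simp add: upto_rec2[of p a] upto_rec1[of b q])
    have V1: "V (poly_verts a b r s)"
    proof (rule less.hyps)
      show "nat (r - a + (b - s)) < nat (r - p + (q - s))" using ab' by auto
    qed (use ab' less.prems in auto)
    have V2: "V (poly_verts p q a b)"
    proof (rule less.hyps)
      show "nat (a - p + (q - b)) < nat (r - p + (q - s))" using ab' by auto
    qed (use ab' less.prems in auto)
    have d: "distinct (map Top [p..a-1] @ Top a # (map Top [a+1..r] @ map Bot [s..b-1]) @ Bot b # map Bot [b+1..q])"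
      using poly_distinct[of p q r s] l by simp
    have E: "Ee T (Top a) (Bot b)" using ab' Ee_TB by simp
    have cr: "\<forall>x\<in>set (map Top [a+1..r] @ map Bot [s..b-1]). \<forall>y\<in>set (map Top [p..a-1]) \<union> set (map Bot [b+1..q]). \<not> Ee T x y"
    proof (intro ballI)
      fix x y assume x: "x \<in> set (map Top [a+1..r] @ map Bot [s..b-1])"
        and y: "y \<in> set (map Top [p..a-1]) \<union> set (map Bot [b+1..q])"
      from x consider (T) x' where "x = Top x'" "a < x'" "x' \<le> r" | (B) x' where "x = Bot x'" "s \<le> x'" "x' < b"
        by auto
      then show "\<not> Ee T x y"
      proof cases
        case T
        from y consider (T2) y' where "y = Top y'" "p \<le> y'" "y' < a" | (B2) y' where "y = Bot y'" "b < y'" "y' \<le> q"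
          by auto
        then show ?thesis
        proof cases
          case T2
          have "Up x' y' \<notin> T" using Up_arc T T2 by fastforce
          moreover have "Up y' x' \<notin> T" using ncT[OF _ ab'(1), of "Up y' x'"] T T2 by auto
          ultimately show ?thesis using T T2 Ee_TT by simp
        next
          case B2
          have "Conn x' y' \<notin> T"
          proof
            assume "Conn x' y' \<in> T"
            from conn_mono[OF this ab'(1)] T B2 show False by (simp add: mult_le_0_iff)
          qed
          then show ?thesis using T B2 Ee_TB by simp
        qed
      next
        case B
        from y consider (T2) y' where "y = Top y'" "p \<le> y'" "y' < a" | (B2) y' where "y = Bot y'" "b < y'" "y' \<le> q"
          by auto
        then show ?thesis
        proof cases
          case T2
          have "Conn y' x' \<notin> T"
          proof
            assume "Conn y' x' \<in> T"
            from conn_mono[OF this ab'(1)] B T2 show False by (simp add: mult_le_0_iff)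
          qed
          then show ?thesis using B T2 Ee_BT by simp
        next
          case B2
          have "Low y' x' \<notin> T" using Low_arc B B2 by fastforce
          moreover have "Low x' y' \<notin> T" using ncT[OF _ ab'(1), of "Low x' y'"] B B2 by auto
          ultimately show ?thesis using B B2 Ee_BB by simp
        qed
      qed
    qed
    from V.step[OF d E cr] V1 V2 p1 p2 l show ?thesis by simp
  next
    case False
    have eq: "p = r \<or> q = s" by (rule noint_eq[OF less.prems False])
    consider "p = r" "q = s" | "p = r" "s < q" | "q = s" "p < r" using eq less.prems by linarith
    then show ?thesis
    proof cases
      case 1
      then show ?thesis by (simp add: poly_verts_def V.base2)
    next
      case 2
      show ?thesis
      proof (cases "q = s + 1")
        case True
        then have "poly_verts p q r s = [Top p, Bot s, Bot (s+1)]"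
          using 2 upto_rec1[of s q] by (simp add: poly_verts_def)
        then show ?thesis by (simp add: V.base3)
      next
        case F: False
        have Low: "Low s q \<in> T" using noint_low[of p q s] less.prems 2 False F by auto
        have l: "poly_verts p q r s = [Top p] @ Bot s # map Bot [s+1..q-1] @ Bot q # []"
          using 2 by (simp add: poly_verts_def upto_rec1[of s q] upto_rec2[of "s+1" q])
        have p1: "Bot s # map Bot [s+1..q-1] @ [Bot q] = map Bot [s..q]"
          using 2 by (simp add: upto_rec1[of s q] upto_rec2[of "s+1" q])
        have d: "distinct ([Top p] @ Bot s # map Bot [s+1..q-1] @ Bot q # [])"
          using poly_distinct[of p q r s] l by simp
        have E: "Ee T (Bot s) (Bot q)" using Low Ee_BB by simp
        have cr: "\<forall>x\<in>set (map Bot [s+1..q-1]). \<forall>y\<in>set [Top p] \<union> set []. \<not> Ee T x y"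
        proof (intro ballI)
          fix x y assume x: "x \<in> set (map Bot [s+1..q-1])" and y: "y \<in> set [Top p] \<union> set []"
          then obtain x' where x': "x = Bot x'" "s < x'" "x' < q" by auto
          have "Conn p x' \<notin> T"
          proof
            assume "Conn p x' \<in> T"
            then have "inter p q r s p x'" unfolding inter_def using x' 2 by auto
            then show False using False by blast
          qed
          then show "\<not> Ee T x y" using x' y Ee_BT by simp
        qed
        have V1: "V (Bot s # map Bot [s+1..q-1] @ [Bot q])" unfolding p1 by (rule V_bot[OF Low])
        have V2: "V ([Top p] @ [Bot s, Bot q] @ [])" using 2 by (auto intro!: V.base3)
        from V.step[OF d E cr V1 V2] l show ?thesis by simp
      qed
    next
      case 3
      show ?thesis
      proof (cases "r = p + 1")
        case True
        then have "poly_verts p q r s = [Top p, Top (p+1), Bot q]"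
          using 3 upto_rec1[of p r] by (simp add: poly_verts_def)
        then show ?thesis by (simp add: V.base3)
      next
        case F: False
        have Up: "Up p r \<in> T" using noint_up[of p q r] less.prems 3 False F by auto
        have l: "poly_verts p q r s = [] @ Top p # map Top [p+1..r-1] @ Top r # [Bot q]"
          using 3 by (simp add: poly_verts_def upto_rec1[of p r] upto_rec2[of "p+1" r])
        have p1: "Top p # map Top [p+1..r-1] @ [Top r] = map Top [p..r]"
          using 3 by (simp add: upto_rec1[of p r] upto_rec2[of "p+1" r])
        have d: "distinct ([] @ Top p # map Top [p+1..r-1] @ Top r # [Bot q])"
          using poly_distinct[of p q r s] l by simp
        have E: "Ee T (Top p) (Top r)" using Up Ee_TT by simp
        have cr: "\<forall>x\<in>set (map Top [p+1..r-1]). \<forall>y\<in>set [] \<union> set [Bot q]. \<not> Ee T x y"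
        proof (intro ballI)
          fix x y assume x: "x \<in> set (map Top [p+1..r-1])" and y: "y \<in> set [] \<union> set [Bot q]"
          then obtain x' where x': "x = Top x'" "p < x'" "x' < r" by auto
          have "Conn x' q \<notin> T"
          proof
            assume "Conn x' q \<in> T"
            then have "inter p q r s x' q" unfolding inter_def using x' 3 by auto
            then show False using False by blast
          qed
          then show "\<not> Ee T x y" using x' y Ee_TB by simp
        qed
        have V1: "V (Top p # map Top [p+1..r-1] @ [Top r])" unfolding p1 by (rule V_top[OF Up])
        have V2: "V ([] @ [Top p, Top r] @ [Bot q])" using 3 by (auto intro!: V.base3)
        from V.step[OF d E cr V1 V2] l show ?thesis by simp
      qed
    qed
  qed
qed

end



context strip begin

lemma bridge_adj:
  assumes d: "distinct vs" and u: "u < length vs" and v: "v < length vs"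
  shows "poly_adj (length vs) (\<lambda>u v. \<exists>x\<in>T. ends x = {vs ! u, vs ! v}) u v \<longleftrightarrow> adjL vs (vs ! u) (vs ! v)"
proof -
  have ne: "(u \<noteq> v) \<longleftrightarrow> (vs ! u \<noteq> vs ! v)" using d u v by (simp add: nth_eq_iff_index_eq)
  have c1: "(v = Suc u mod length vs) \<longleftrightarrow> cyc vs (vs ! u) (vs ! v)" using cyc_nth[OF d u v] by simp
  have c2: "(u = Suc v mod length vs) \<longleftrightarrow> cyc vs (vs ! v) (vs ! u)" using cyc_nth[OF d v u] by simp
  have e: "((\<exists>x\<in>T. ends x = {vs ! u, vs ! v}) \<or> (\<exists>x\<in>T. ends x = {vs ! v, vs ! u})) \<longleftrightarrow> Ee T (vs ! u) (vs ! v)"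
    by (auto simp: Ee_def insert_commute)
  have m: "vs ! u \<in> set vs" "vs ! v \<in> set vs" using u v by auto
  show ?thesis unfolding poly_adj_def adjL_def using ne c1 c2 e m u v by blast
qed

lemma bridge_tri:
  assumes d: "distinct vs" and l: "l < length vs"
  shows "int (poly_triangles_at (length vs) (\<lambda>u v. \<exists>x\<in>T. ends x = {vs ! u, vs ! v}) l) = qd vs (vs ! l)"
proof -
  let ?N = "length vs" and ?D = "\<lambda>u v. \<exists>x\<in>T. ends x = {vs ! u, vs ! v}"
  define F where "F = {S. S \<subseteq> {..<?N} \<and> card S = 3 \<and> l \<in> S \<and> (\<forall>u\<in>S. \<forall>v\<in>S. u \<noteq> v \<longrightarrow> poly_adj ?N ?D u v)}"
  have injn: "inj_on (nth vs) {..<?N}" using inj_on_nth[OF d] by simp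
  have inj: "inj_on (\<lambda>S. (!) vs ` S) F"
  proof (rule inj_onI)
    fix S1 S2 assume "S1 \<in> F" "S2 \<in> F" "(!) vs ` S1 = (!) vs ` S2"
    then show "S1 = S2" using inj_on_image_eq_iff[OF injn] unfolding F_def by blast
  qed
  have img: "(\<lambda>S. (!) vs ` S) ` F = cl vs (vs ! l)"
  proof (intro set_eqI iffI)
    fix S' assume "S' \<in> (\<lambda>S. (!) vs ` S) ` F"
    then obtain S where S: "S \<in> F" "S' = (!) vs ` S" by blast
    have Ssub: "S \<subseteq> {..<?N}" using S unfolding F_def by blast
    have "card S' = card S" unfolding S(2) by (rule card_image[OF inj_on_subset[OF injn Ssub]])
    moreover have "S' \<subseteq> set vs" using Ssub S(2) by auto
    moreover have "vs ! l \<in> S'" using S unfolding F_def by auto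
    moreover have "\<forall>a\<in>S'. \<forall>b\<in>S'. a \<noteq> b \<longrightarrow> adjL vs a b"
    proof (intro ballI impI)
      fix a b assume a: "a \<in> S'" and b: "b \<in> S'" and ab: "a \<noteq> b"
      then obtain u v where uv: "u \<in> S" "v \<in> S" "a = vs ! u" "b = vs ! v" using S(2) by blast
      then have "u \<noteq> v" using ab by auto
      then have "poly_adj ?N ?D u v" using S uv unfolding F_def by blast
      then show "adjL vs a b" using bridge_adj[OF d] uv Ssub by auto
    qed
    ultimately show "S' \<in> cl vs (vs ! l)" using S unfolding F_def cl_def by auto
  next
    fix S' assume S': "S' \<in> cl vs (vs ! l)"
    define S where "S = {i. i < ?N \<and> vs ! i \<in> S'}"
    have Ssub: "S \<subseteq> {..<?N}" unfolding S_def by auto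
    have im: "(!) vs ` S = S'"
    proof
      show "(!) vs ` S \<subseteq> S'" unfolding S_def by auto
      show "S' \<subseteq> (!) vs ` S"
      proof
        fix a assume "a \<in> S'"
        moreover then have "a \<in> set vs" using S' unfolding cl_def by auto
        then obtain i where "i < ?N" "vs ! i = a" by (auto simp: in_set_conv_nth)
        ultimately show "a \<in> (!) vs ` S" unfolding S_def by auto
      qed
    qed
    have "card S = card S'" using card_image[OF inj_on_subset[OF injn Ssub]] im by simp
    moreover have "l \<in> S" using S' l unfolding S_def cl_def by auto
    moreover have "\<forall>u\<in>S. \<forall>v\<in>S. u \<noteq> v \<longrightarrow> poly_adj ?N ?D u v"
    proof (intro ballI impI)
      fix u v assume u: "u \<in> S" and v: "v \<in> S" and uv: "u \<noteq> v"
      have "vs ! u \<noteq> vs ! v" using uv u v d unfolding S_def by (simp add: nth_eq_iff_index_eq)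
      then have "adjL vs (vs ! u) (vs ! v)" using S' u v unfolding S_def cl_def by auto
      then show "poly_adj ?N ?D u v" using bridge_adj[OF d] u v unfolding S_def by auto
    qed
    ultimately have "S \<in> F" using Ssub S' unfolding F_def cl_def by auto
    then show "S' \<in> (\<lambda>S. (!) vs ` S) ` F" using im by blast
  qed
  have "poly_triangles_at ?N ?D l = card F" unfolding poly_triangles_at_def F_def by simp
  also have "\<dots> = card (cl vs (vs ! l))" using card_image[OF inj] img by simp
  finally show ?thesis by (simp add: qd_def)
qed

lemma bridge_friese:
  assumes d: "distinct vs" and h: "vs = A @ x # pre @ y # C"
  shows "friese (length vs) (\<lambda>u v. \<exists>x\<in>T. ends x = {vs ! u, vs ! v}) (length A) (length A + 1 + length pre)
       = e11 (prodL (map (qd vs) pre))"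
proof -
  let ?N = "length vs" and ?D = "\<lambda>u v. \<exists>x\<in>T. ends x = {vs ! u, vs ! v}"
  let ?a = "\<lambda>x. int (poly_triangles_at ?N ?D x)"
  let ?k = "length A"
  have N: "?N = length A + 1 + length pre + 1 + length C" using h by simp
  have m: "(length A + 1 + length pre + ?N - length A) mod ?N = Suc (length pre)"
  proof -
    have "length A + 1 + length pre + ?N - length A = Suc (length pre) + ?N" by simp
    moreover have "Suc (length pre) < ?N" using N by simp
    ultimately show ?thesis by (metis mod_add_self2 mod_less)
  qed
  have eq: "map (\<lambda>t. ?a ((?k + t + 1) mod ?N)) [0..<length pre] = map (qd vs) pre"
  proof (rule nth_equalityI)
    show "length (map (\<lambda>t. ?a ((?k + t + 1) mod ?N)) [0..<length pre]) = length (map (qd vs) pre)" by simp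
  next
    fix t assume "t < length (map (\<lambda>t. ?a ((?k + t + 1) mod ?N)) [0..<length pre])"
    then have t: "t < length pre" by simp
    then have lt: "?k + t + 1 < ?N" using N by simp
    have "vs ! (?k + t + 1) = pre ! t" using t unfolding h by (simp add: nth_append)
    then show "map (\<lambda>t. ?a ((?k + t + 1) mod ?N)) [0..<length pre] ! t = map (qd vs) pre ! t"
      using t lt bridge_tri[OF d lt] by simp
  qed
  show ?thesis unfolding friese_def m using friese_seq_prod[of ?a ?N ?k "length pre"] eq by simp
qed

end



context strip begin

lemma phi_eq:
  assumes v: "valid_choice T i j p q r s"
  shows "phi_at T i j p q r s = e11 (prodL (map (qd (poly_verts p q r s)) (map Top [i+1..r] @ map Bot [s..j-1])))"
proof -
  from v have h: "p < i" "i < r" "s < j" "j < q" unfolding valid_choice_def by auto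
  let ?vs = "poly_verts p q r s"
  let ?A = "map Top [p..i-1]" and ?pre = "map Top [i+1..r] @ map Bot [s..j-1]" and ?C = "map Bot [j+1..q]"
  have l: "?vs = ?A @ Top i # ?pre @ Bot j # ?C"
    unfolding poly_verts_def using h by (simp add: upto_split3[of p i r] upto_split3[of s j q])
  have k: "nat (i - p) = length ?A" by simp
  have l2: "nat (r - p + 1) + nat (j - s) = length ?A + 1 + length ?pre" using h by simp
  show ?thesis unfolding phi_at_def Let_def k l2 by (rule bridge_friese[OF poly_distinct l])
qed

lemma split_list:
  assumes "p \<le> a" "a \<le> r" "s \<le> b" "b \<le> q"
  shows "poly_verts p q r s = map Top [p..a-1] @ Top a # (map Top [a+1..r] @ map Bot [s..b-1]) @ Bot b # map Bot [b+1..q]"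
    and "Top a # (map Top [a+1..r] @ map Bot [s..b-1]) @ [Bot b] = poly_verts a b r s"
    and "map Top [p..a-1] @ [Top a, Bot b] @ map Bot [b+1..q] = poly_verts p q a b"
  unfolding poly_verts_def using assms
  by (simp_all add: upto_split3[of p a r] upto_split3[of s b q] upto_rec1[of a r] upto_rec2[of s b]
      upto_rec2[of p a] upto_rec1[of b q])

lemma split_cross:
  assumes ab: "Conn a b \<in> T"
  shows "\<forall>x\<in>set (map Top [a+1..r] @ map Bot [s..b-1]). \<forall>y\<in>set (map Top [p..a-1]) \<union> set (map Bot [b+1..q]). \<not> Ee T x y"
proof (intro ballI)
  fix x y assume x: "x \<in> set (map Top [a+1..r] @ map Bot [s..b-1])"
    and y: "y \<in> set (map Top [p..a-1]) \<union> set (map Bot [b+1..q])"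
  from x consider (T) x' where "x = Top x'" "a < x'" "x' \<le> r" | (B) x' where "x = Bot x'" "s \<le> x'" "x' < b"
    by auto
  then show "\<not> Ee T x y"
  proof cases
    case T
    from y consider (T2) y' where "y = Top y'" "p \<le> y'" "y' < a" | (B2) y' where "y = Bot y'" "b < y'" "y' \<le> q"
      by auto
    then show ?thesis
    proof cases
      case T2
      have "Up x' y' \<notin> T" using Up_arc T T2 by fastforce
      moreover have "Up y' x' \<notin> T" using ncT[OF _ ab, of "Up y' x'"] T T2 by auto
      ultimately show ?thesis using T T2 Ee_TT by simp
    next
      case B2
      have "Conn x' y' \<notin> T"
      proof
        assume "Conn x' y' \<in> T"
        from conn_mono[OF this ab] T B2 show False by (simp add: mult_le_0_iff)
      qed
      then show ?thesis using T B2 Ee_TB by simp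
    qed
  next
    case B
    from y consider (T2) y' where "y = Top y'" "p \<le> y'" "y' < a" | (B2) y' where "y = Bot y'" "b < y'" "y' \<le> q"
      by auto
    then show ?thesis
    proof cases
      case T2
      have "Conn y' x' \<notin> T"
      proof
        assume "Conn y' x' \<in> T"
        from conn_mono[OF this ab] B T2 show False by (simp add: mult_le_0_iff)
      qed
      then show ?thesis using B T2 Ee_BT by simp
    next
      case B2
      have "Low y' x' \<notin> T" using Low_arc B B2 by fastforce
      moreover have "Low x' y' \<notin> T" using ncT[OF _ ab, of "Low x' y'"] B B2 by auto
      ultimately show ?thesis using B B2 Ee_BB by simp
    qed
  qed
qed

lemma inv_p:
  assumes v: "valid_choice T i j p q r s" and PQ: "Conn P Q \<in> T" "P \<le> p" "q \<le> Q"
  shows "phi_at T i j p q r s = phi_at T i j P Q r s"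
proof -
  from v have h: "p < i" "i < r" "s < j" "j < q" "Conn p q \<in> T" "Conn r s \<in> T" unfolding valid_choice_def by auto
  have v2: "valid_choice T i j P Q r s" using v PQ unfolding valid_choice_def by auto
  let ?xs = "map Top [P..p-1]" and ?ys = "map Top [p+1..r] @ map Bot [s..q-1]" and ?zs = "map Bot [q+1..Q]"
  note sl = split_list[of P p r s q Q]
  have l: "poly_verts P Q r s = ?xs @ Top p # ?ys @ Bot q # ?zs" using sl(1) h PQ by simp
  have p1: "Top p # ?ys @ [Bot q] = poly_verts p q r s" using sl(2) h PQ by simp
  have d: "distinct (?xs @ Top p # ?ys @ Bot q # ?zs)" using poly_distinct l by metis
  have E: "Ee T (Top p) (Bot q)" using h Ee_TB by simp
  have cr: "\<forall>x\<in>set ?ys. \<forall>y\<in>set ?xs \<union> set ?zs. \<not> Ee T x y" by (rule split_cross[OF h(5)])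
  have m: "map (qd (poly_verts P Q r s)) (map Top [i+1..r] @ map Bot [s..j-1])
         = map (qd (poly_verts p q r s)) (map Top [i+1..r] @ map Bot [s..j-1])"
  proof (rule map_eq_on)
    fix x assume x: "x \<in> set (map Top [i+1..r] @ map Bot [s..j-1])"
    then have "x \<in> set ?ys" using h by auto
    from qd_split(1)[OF d E cr this] show "qd (poly_verts P Q r s) x = qd (poly_verts p q r s) x"
      unfolding l p1 .
  qed
  show ?thesis unfolding phi_eq[OF v] phi_eq[OF v2] m ..
qed

lemma inv_r:
  assumes v: "valid_choice T i j p q r s" and RS: "Conn R S \<in> T" "r \<le> R" "S \<le> s"
  shows "phi_at T i j p q r s = phi_at T i j p q R S"
proof -
  from v have h: "p < i" "i < r" "s < j" "j < q" "Conn p q \<in> T" "Conn r s \<in> T" unfolding valid_choice_def by auto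
  have v2: "valid_choice T i j p q R S" using v RS unfolding valid_choice_def by auto
  let ?xs = "map Top [p..r-1]" and ?ys = "map Top [r+1..R] @ map Bot [S..s-1]" and ?zs = "map Bot [s+1..q]"
  note sl = split_list[of p r R S s q]
  have l: "poly_verts p q R S = ?xs @ Top r # ?ys @ Bot s # ?zs" using sl(1) h RS by simp
  have p1: "Top r # ?ys @ [Bot s] = poly_verts r s R S" using sl(2) h RS by simp
  have p2: "?xs @ [Top r, Bot s] @ ?zs = poly_verts p q r s" using sl(3) h RS by simp
  have d: "distinct (?xs @ Top r # ?ys @ Bot s # ?zs)" using poly_distinct l by metis
  have E: "Ee T (Top r) (Bot s)" using h Ee_TB by simp
  have cr: "\<forall>x\<in>set ?ys. \<forall>y\<in>set ?xs \<union> set ?zs. \<not> Ee T x y" by (rule split_cross[OF h(6)])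
  have CC1: "CC (Top r # ?ys @ [Bot s])" unfolding p1 using V_props[OF V_poly[OF h(6) RS(1)]] RS by auto
  let ?X = "map Top [i+1..r-1]" and ?Z = "map Bot [s+1..j-1]"
  have po: "prodL (map (qd (?xs @ Top r # ?ys @ Bot s # ?zs)) (?X @ [Top r] @ ?ys @ [Bot s] @ ?Z))
       = prodL (map (qd (?xs @ [Top r, Bot s] @ ?zs)) (?X @ [Top r] @ [] @ [Bot s] @ ?Z))"
    by (rule prod_outer[OF d E cr CC1]) (use h in auto)
  have L1: "map Top [i+1..R] @ map Bot [S..j-1] = ?X @ [Top r] @ ?ys @ [Bot s] @ ?Z"
    using h RS by (simp add: upto_split3[of "i+1" r R] upto_split3[of S s "j-1"])
  have L2: "map Top [i+1..r] @ map Bot [s..j-1] = ?X @ [Top r] @ [] @ [Bot s] @ ?Z"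
    using h by (simp add: upto_rec2[of "i+1" r] upto_rec1[of s "j-1"])
  show ?thesis unfolding phi_eq[OF v] phi_eq[OF v2] L1 L2 l[symmetric] p2 using po[symmetric] unfolding l[symmetric] p2
    by simp
qed

lemma inv_both:
  assumes v: "valid_choice T i j p q r s" and PQ: "Conn P Q \<in> T" "P \<le> p" "q \<le> Q"
    and RS: "Conn R S \<in> T" "r \<le> R" "S \<le> s"
  shows "phi_at T i j p q r s = phi_at T i j P Q R S"
proof -
  have v2: "valid_choice T i j P Q r s" using v PQ unfolding valid_choice_def by auto
  show ?thesis using inv_p[OF v PQ] inv_r[OF v2 RS] by simp
qed

lemma outer_PQ:
  assumes "Conn p q \<in> T" "Conn p' q' \<in> T"
  shows "\<exists>P Q. Conn P Q \<in> T \<and> P \<le> p \<and> P \<le> p' \<and> q \<le> Q \<and> q' \<le> Q"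
proof (cases "p < p'")
  case True
  then have "q' \<le> q" using conn_mono'[OF assms] by simp
  then show ?thesis using assms True by (intro exI[of _ p] exI[of _ q]) auto
next
  case False
  show ?thesis
  proof (cases "p' < p")
    case True
    then have "q \<le> q'" using conn_mono'[OF assms(2,1)] by simp
    then show ?thesis using assms True by (intro exI[of _ p'] exI[of _ q']) auto
  next
    case False
    with \<open>\<not> p < p'\<close> have "p = p'" by simp
    show ?thesis
    proof (cases "q \<le> q'")
      case True then show ?thesis using assms \<open>p = p'\<close> by (intro exI[of _ p] exI[of _ q']) auto
    next
      case False then show ?thesis using assms \<open>p = p'\<close> by (intro exI[of _ p] exI[of _ q]) auto
    qed
  qed
qed

lemma outer_RS:
  assumes "Conn r s \<in> T" "Conn r' s' \<in> T"
  shows "\<exists>R S. Conn R S \<in> T \<and> r \<le> R \<and> r' \<le> R \<and> S \<le> s \<and> S \<le> s'"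
proof (cases "r < r'")
  case True
  then have "s' \<le> s" using conn_mono'[OF assms] by simp
  then show ?thesis using assms True by (intro exI[of _ r'] exI[of _ s']) auto
next
  case False
  show ?thesis
  proof (cases "r' < r")
    case True
    then have "s \<le> s'" using conn_mono'[OF assms(2,1)] by simp
    then show ?thesis using assms True by (intro exI[of _ r] exI[of _ s]) auto
  next
    case False
    with \<open>\<not> r < r'\<close> have "r = r'" by simp
    show ?thesis
    proof (cases "s \<le> s'")
      case True then show ?thesis using assms \<open>r = r'\<close> by (intro exI[of _ r] exI[of _ s]) auto
    next
      case False then show ?thesis using assms \<open>r = r'\<close> by (intro exI[of _ r] exI[of _ s']) auto
    qed
  qed
qed

lemma well_defined:
  assumes v: "valid_choice T i j p q r s" and v': "valid_choice T i j p' q' r' s'"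
  shows "phi_at T i j p q r s = phi_at T i j p' q' r' s'"
proof -
  obtain P Q where PQ: "Conn P Q \<in> T" "P \<le> p" "P \<le> p'" "q \<le> Q" "q' \<le> Q"
    using outer_PQ[of p q p' q'] v v' unfolding valid_choice_def by blast
  obtain R S where RS: "Conn R S \<in> T" "r \<le> R" "r' \<le> R" "S \<le> s" "S \<le> s'"
    using outer_RS[of r s r' s'] v v' unfolding valid_choice_def by blast
  show ?thesis using inv_both[OF v PQ(1,2,4) RS(1,2,4)] inv_both[OF v' PQ(1,3,5) RS(1,3,5)] by simp
qed

end



lemma diamond_alg: "det2 Q = 1 \<Longrightarrow>
  e11 (mm Q (Mx x)) * e11 (mm (Mx y) Q) - e11 (mm (Mx y) (mm Q (Mx x))) * e11 Q = 1"
  by (cases Q) (simp add: Mx_def algebra_simps)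

context strip begin

lemma Phi_eq: assumes v: "valid_choice T i j p q r s" shows "Phi T i j = phi_at T i j p q r s"
proof -
  let ?P = "\<lambda>(p, q, r, s). valid_choice T i j p q r s"
  have ex: "\<exists>x. ?P x" using v by (intro exI[of _ "(p, q, r, s)"]) simp
  obtain p' q' r' s' where e: "(SOME x. ?P x) = (p', q', r', s')" by (metis prod_cases4)
  have "?P (SOME x. ?P x)" by (rule someI_ex[OF ex])
  then have v': "valid_choice T i j p' q' r' s'" using e by simp
  have "Phi T i j = phi_at T i j p' q' r' s'" unfolding Phi_def e by simp
  also have "\<dots> = phi_at T i j p q r s" using well_defined[OF v' v] .
  finally show ?thesis .
qed

lemma exists_valid: "\<exists>p q r s. valid_choice T i j p q r s"
proof -
  obtain p q where "Conn p q \<in> T" "p < i" "q > j" using enT1 by blast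
  moreover obtain r s where "Conn r s \<in> T" "r > i" "s < j" using enT2 by blast
  ultimately show ?thesis unfolding valid_choice_def by blast
qed

lemma value_props:
  assumes v: "valid_choice T i j p q r s"
  shows "phi_at T i j p q r s \<ge> 1 \<and> (phi_at T i j p q r s = 1 \<longleftrightarrow> Conn i j \<in> T)"
proof -
  from v have h: "p < i" "i < r" "s < j" "j < q" "Conn p q \<in> T" "Conn r s \<in> T" unfolding valid_choice_def by auto
  let ?vs = "poly_verts p q r s"
  let ?A = "map Top [p..i-1]" and ?pre = "map Top [i+1..r] @ map Bot [s..j-1]" and ?C = "map Bot [j+1..q]"
  have l: "?vs = ?A @ Top i # ?pre @ Bot j # ?C"
    unfolding poly_verts_def using h by (simp add: upto_split3[of p i r] upto_split3[of s j q])
  have F: "F1all ?vs" using V_props[OF V_poly[OF h(5) h(6)]] h by auto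
  have r: "rotate (length ?A) ?vs = Top i # ?pre @ Bot j # (?C @ ?A)"
  proof -
    have "rotate (length ?A) (?A @ (Top i # ?pre @ Bot j # ?C)) = (Top i # ?pre @ Bot j # ?C) @ ?A"
      by (rule rotate_append)
    then show ?thesis unfolding l by simp
  qed
  note res = F1all_D[OF F r]
  have d: "distinct ?vs" by (rule poly_distinct)
  have N: "length ?vs = length ?A + 1 + length ?pre + 1 + length ?C" unfolding l by simp
  have preNE: "length ?pre > 0" using h by simp
  have CNE: "length ?C > 0" using h by simp
  have u: "?vs ! length ?A = Top i" unfolding l by (simp only: nth_append_length)
  have w: "?vs ! (length ?A + 1 + length ?pre) = Bot j" unfolding l by (simp add: nth_append)
  have ul: "length ?A < length ?vs" and wl: "length ?A + 1 + length ?pre < length ?vs" using N CNE by auto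
  have nc1: "\<not> cyc ?vs (Top i) (Bot j)"
  proof -
    have "Suc (length ?A) mod length ?vs = Suc (length ?A)" using N by simp
    then show ?thesis using cyc_nth[OF d ul wl] u w preNE h by simp
  qed
  have nc2: "\<not> cyc ?vs (Bot j) (Top i)"
  proof -
    have "Suc (length ?A + 1 + length ?pre) mod length ?vs = Suc (length ?A + 1 + length ?pre)" using N CNE by simp
    then show ?thesis using cyc_nth[OF d wl ul] u w by simp
  qed
  have adj: "adjL ?vs (Top i) (Bot j) \<longleftrightarrow> Conn i j \<in> T"
    unfolding adjL_def using nc1 nc2 Ee_TB l by auto
  show ?thesis unfolding phi_eq[OF v] using res adj by simp
qed

lemma Phi_props: "Phi T i j \<ge> 1 \<and> (Phi T i j = 1 \<longleftrightarrow> Conn i j \<in> T)"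
proof -
  obtain p q r s where "valid_choice T i j p q r s" using exists_valid by blast
  then show ?thesis using Phi_eq value_props by simp
qed

lemma Phi_diamond: "Phi T i j * Phi T (i+1) (j+1) - Phi T i (j+1) * Phi T (i+1) j = 1"
proof -
  obtain p q where pq: "Conn p q \<in> T" "p < i" "q > j + 1" using enT1 by blast
  obtain r s where rs: "Conn r s \<in> T" "r > i + 1" "s < j" using enT2 by blast
  have v1: "valid_choice T i j p q r s" and v2: "valid_choice T (i+1) (j+1) p q r s"
   and v3: "valid_choice T i (j+1) p q r s" and v4: "valid_choice T (i+1) j p q r s"
    using pq rs unfolding valid_choice_def by auto
  let ?a = "qd (poly_verts p q r s)"
  let ?B = "map Top [i+1+1..r] @ map Bot [s..j-1]"
  have L1: "map Top [i+1..r] @ map Bot [s..j-1] = Top (i+1) # ?B" using rs by (simp add: upto_rec1[of "i+1" r])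
  have L2: "map Top [i+1+1..r] @ map Bot [s..j+1-1] = ?B @ [Bot j]" using rs by (simp add: upto_rec2[of s j])
  have L3: "map Top [i+1..r] @ map Bot [s..j+1-1] = Top (i+1) # ?B @ [Bot j]"
    using rs by (simp add: upto_rec1[of "i+1" r] upto_rec2[of s j])
  have "Phi T i j = e11 (mm (prodL (map ?a ?B)) (Mx (?a (Top (i+1)))))"
    unfolding Phi_eq[OF v1] phi_eq[OF v1] L1 by simp
  moreover have "Phi T (i+1) (j+1) = e11 (mm (Mx (?a (Bot j))) (prodL (map ?a ?B)))"
    unfolding Phi_eq[OF v2] phi_eq[OF v2] L2 by (simp only: map_append list.map prodL_snoc)
  moreover have "Phi T i (j+1) = e11 (mm (Mx (?a (Bot j))) (mm (prodL (map ?a ?B)) (Mx (?a (Top (i+1))))))"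
    unfolding Phi_eq[OF v3] phi_eq[OF v3] L3 by (simp add: prodL_append mm_assoc)
  moreover have "Phi T (i+1) j = e11 (prodL (map ?a ?B))"
    unfolding Phi_eq[OF v4] phi_eq[OF v4] by simp
  ultimately show ?thesis using diamond_alg[OF det_prodL] by simp
qed

end

theorem proposition4p3:
  assumes "strip_triangulation T"
  shows "(\<forall>i j. \<exists>p q r s. valid_choice T i j p q r s)
       \<and> (\<forall>i j p q r s p' q' r' s'. valid_choice T i j p q r s \<and> valid_choice T i j p' q' r' s'
              \<longrightarrow> phi_at T i j p q r s = phi_at T i j p' q' r' s')
       \<and> sl2_tiling (Phi T)
       \<and> enough_ones (Phi T)
       \<and> (\<forall>i j. Phi T i j = 1 \<longleftrightarrow> Conn i j \<in> T)"
proof -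
  interpret strip T by unfold_locales (rule assms)
  have A: "\<forall>i j. \<exists>p q r s. valid_choice T i j p q r s" using exists_valid by blast
  have B: "\<forall>i j p q r s p' q' r' s'. valid_choice T i j p q r s \<and> valid_choice T i j p' q' r' s'
              \<longrightarrow> phi_at T i j p q r s = phi_at T i j p' q' r' s'" using well_defined by blast
  have C: "sl2_tiling (Phi T)" unfolding sl2_tiling_def using Phi_props Phi_diamond by blast
  have E: "\<forall>i j. Phi T i j = 1 \<longleftrightarrow> Conn i j \<in> T" using Phi_props by blast
  have D: "enough_ones (Phi T)" unfolding enough_ones_def
  proof (intro allI conjI)
    fix i j
    obtain p q where "Conn p q \<in> T" "p < i" "q > j" using enT1 by blast
    then show "\<exists>p q. p < i \<and> j < q \<and> Phi T p q = 1" using E by blast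
    obtain r s where "Conn r s \<in> T" "r > i" "s < j" using enT2 by blast
    then show "\<exists>p q. i < p \<and> q < j \<and> Phi T p q = 1" using E by blast
  qed
  show ?thesis using A B C D E by blast
qed



end
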